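(* Let $PG_n$ be the random pentagonal chain network described in the context, and assume Hypotheses 1 and 2 of the context hold. Then: (i) For $n\ge 1$, $$Var\big(Gut(PG_{n})\big)=\frac{1}{30}\Big(\sigma^{2}_{1}n^{5}-5r_{1}n^{4}+10\tilde{\sigma}^{2}_{1}n^{3}+(65r_{1}-30\sigma^{2}_{1}-45\tilde{\sigma}^{2}_{1})n^{2}+(59\sigma^{2}_{1}+65\tilde{\sigma}^{2}_{1}-120r_{1})n+(60r_{1}-30\sigma^{2}_{1}-30\tilde{\sigma}^{2}_{1})\Big),$$ where $\sigma^{2}_{1}=288^{2}p_{1}+432^{2}(1-p_{1})-\big(288p_{1}+432(1-p_{1})\big)^{2}$, $\tilde{\sigma}^{2}_{1}=156^{2}p_{1}+300^{2}(1-p_{1})-\big(156p_{1}+300(1-p_{1})\big)^{2}$, $r_{1}=288\cdot156\cdot p_{1}+432\cdot300\cdot(1-p_{1})-\big(288p_{1}+432(1-p_{1})\big)\big(156p_{1}+300(1-p_{1})\big)$. (ii) $Gut(PG_n)$ is asymptotically normal: $$\lim_{n\rightarrow \infty}\sup_{a\in \mathbb{R}}\Big| \mathbb{P}\Big(\frac{Gut(PG_{n})-\mathbb{E}\big(Gut(PG_{n})\big)}{\sqrt{Var\big(Gut(PG_{n})\big)}}\leq a\Big)-\int^{a}_{-\infty}\frac{1}{\sqrt{2\pi}}e^{-t^{2}/2}\,dt \Big| =0.$$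
   Context: Random chain network $PG_n$: $PG_1$ is a $5$-cycle (pentagon). For $n\ge 1$, $PG_{n+1}$ is obtained from $PG_n$ by adding a new pentagon $O_{n+1}$ with vertices $x_1,\dots,x_5$ in cyclic order and adding one edge joining $x_1$ to a vertex $u_n$ of $PG_n$. The vertex $u_1$ is any vertex of $PG_1$. For $n\ge 2$, $u_n$ is a vertex of the last pentagon $O_n$ (whose vertex $x_1$ is the one joined to $u_{n-1}$): either $u_n\in\{x_2,x_5\}$ of $O_n$ (neighbours of $x_1$ in $O_n$; set $Z_n^1=1$, $Z_n^2=0$) or $u_n\in\{x_3,x_4\}$ of $O_n$ (vertices at distance $2$ from $x_1$ in $O_n$; set $Z_n^1=0$, $Z_n^2=1$), with $\mathbb{P}(Z_n^1=1)=p_1$, $\mathbb{P}(Z_n^2=1)=p_2=1-p_1$, constants independent of $n$. Hypothesis 1: the random vectors $(Z_n^1,Z_n^2)$, $n=2,3,\dots$, are independent. Hypothesis 2: $0<p_i<1$ for $i=1,2$. For a graph $G$, $d(v)$ is the degree of $v$, $d(u,v)$ the shortest-path distance, and the Gutman index is $Gut(G)=\sum_{\{u,v\}\subseteq V_G} d(u)d(v)\,d(u,v)$ over unordered pairs of distinct vertices. *)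

theory Defs
  imports "HOL-Probability.Probability"
begin

text \<open>Vertex (i,j) of the pentagonal chain: vertex x_(j+1) of pentagon O_i, with
  i in {1..n}, j in {0..4}; cycle order x_1,...,x_5 corresponds to j = 0,...,4.
  The attachment function u gives, for each i < n, the index j = u i of the vertex
  u_i of O_i that is joined to x_1 = (i+1,0) of O_(i+1).\<close>

definition pg_verts :: "nat \<Rightarrow> (nat \<times> nat) set" where
  "pg_verts n = {1..n} \<times> {..<5}"

definition pg_edges :: "(nat \<Rightarrow> nat) \<Rightarrow> nat \<Rightarrow> ((nat \<times> nat) \<times> (nat \<times> nat)) set" where
  "pg_edges u n = {((i,j),(i',j')).
      (i \<in> {1..n} \<and> i' = i \<and> j < 5 \<and> j' < 5 \<and> (j' = (j+1) mod 5 \<or> j = (j'+1) mod 5))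
    \<or> (1 \<le> i \<and> i < n \<and> j = u i \<and> i' = i + 1 \<and> j' = 0)
    \<or> (1 \<le> i' \<and> i' < n \<and> j' = u i' \<and> i = i' + 1 \<and> j = 0)}"

definition pg_deg :: "(nat \<Rightarrow> nat) \<Rightarrow> nat \<Rightarrow> nat \<times> nat \<Rightarrow> nat" where
  "pg_deg u n v = card {w. (v, w) \<in> pg_edges u n}"

definition pg_dist :: "(nat \<Rightarrow> nat) \<Rightarrow> nat \<Rightarrow> nat \<times> nat \<Rightarrow> nat \<times> nat \<Rightarrow> nat" where
  "pg_dist u n v w = (LEAST k. (v, w) \<in> (pg_edges u n) ^^ k)"

text \<open>Gutman index: sum over unordered pairs of distinct vertices
  (= half the sum over ordered pairs).\<close>
definition gut :: "(nat \<Rightarrow> nat) \<Rightarrow> nat \<Rightarrow> real" where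
  "gut u n = (\<Sum>v\<in>pg_verts n. \<Sum>w\<in>pg_verts n - {v}.
       real (pg_deg u n v * pg_deg u n w * pg_dist u n v w)) / 2"

end

theory Submission
  imports Defs "HOL-Real_Asymp.Real_Asymp"
begin

definition dc :: "nat \<Rightarrow> nat \<Rightarrow> nat" where
  "dc x y = (let d = (if x \<le> y then y - x else x - y) in min d (5 - d))"

definition H :: "(nat \<Rightarrow> nat) \<Rightarrow> nat \<Rightarrow> nat \<Rightarrow> nat \<Rightarrow> nat \<Rightarrow> nat" where
  "H u i j i' j' = dc j (u i) + (\<Sum>k\<in>{Suc i..<i'}. dc 0 (u k) + 1) + 1 + dc 0 j'"

fun Dd :: "(nat \<Rightarrow> nat) \<Rightarrow> nat \<times> nat \<Rightarrow> nat \<times> nat \<Rightarrow> nat" where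
  "Dd u (i,j) (i',j') = (if i = i' then dc j j' else if i < i' then H u i j i' j' else H u i' j' i j)"

lemma dc_sym: "dc x y = dc y x"
  by (simp add: dc_def Let_def)

lemma dc_self[simp]: "dc x x = 0"
  by (simp add: dc_def)

lemma lt5_cases: "(j::nat) < 5 \<Longrightarrow> j = 0 \<or> j = 1 \<or> j = 2 \<or> j = 3 \<or> j = 4"
  by auto

lemma dc_tri: "x < 5 \<Longrightarrow> y < 5 \<Longrightarrow> z < 5 \<Longrightarrow> dc x z \<le> dc x y + dc y z"
  apply (drule lt5_cases)+
  by (auto simp: dc_def Let_def)

lemma dc_le2: "x < 5 \<Longrightarrow> y < 5 \<Longrightarrow> dc x y \<le> 2"
  apply (drule lt5_cases)+
  by (auto simp: dc_def Let_def)

lemma edge_cases: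
  assumes "(w', w) \<in> pg_edges u n"
  shows "(\<exists>i j j'. w' = (i,j) \<and> w = (i,j') \<and> 1 \<le> i \<and> i \<le> n \<and> j < 5 \<and> j' < 5 \<and> dc j j' = 1)
    \<or> (\<exists>i. 1 \<le> i \<and> i < n \<and> w' = (i, u i) \<and> w = (i+1, 0))
    \<or> (\<exists>i. 1 \<le> i \<and> i < n \<and> w = (i, u i) \<and> w' = (i+1, 0))"
proof -
  obtain i j i' j' where w: "w' = (i,j)" "w = (i',j')" by (cases w', cases w) auto
  have dc1: "dc j j' = 1" if "j < 5" "j' < 5" "j' = (j+1) mod 5 \<or> j = (j'+1) mod 5" for j j' :: nat
    using that by (auto dest!: lt5_cases simp: dc_def Let_def)
  show ?thesis using assms dc1 unfolding w pg_edges_def by auto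
qed

lemma edge_in: "1 \<le> i \<Longrightarrow> i \<le> n \<Longrightarrow> j < 5 \<Longrightarrow> j' < 5 \<Longrightarrow> dc j j' = 1 \<Longrightarrow> ((i,j),(i,j')) \<in> pg_edges u n"
  unfolding pg_edges_def
  apply (drule lt5_cases)+
  by (auto simp: dc_def Let_def)

lemma edge_conn1: "1 \<le> i \<Longrightarrow> i < n \<Longrightarrow> ((i,u i),(i+1,0)) \<in> pg_edges u n"
  unfolding pg_edges_def by auto

lemma edge_conn2: "1 \<le> i \<Longrightarrow> i < n \<Longrightarrow> ((i+1,0),(i,u i)) \<in> pg_edges u n"
  unfolding pg_edges_def by auto

lemma relpow_trans: "(a,b) \<in> R ^^ m \<Longrightarrow> (b,c) \<in> R ^^ k \<Longrightarrow> (a,c) \<in> R ^^ (m + k)"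
  by (auto simp: relpow_add)

lemma cyc_walk:
  assumes "1 \<le> i" "i \<le> n" "j < 5" "j' < 5"
  shows "((i,j),(i,j')) \<in> pg_edges u n ^^ dc j j'"
proof -
  have e: "((i,x),(i,y)) \<in> pg_edges u n" if "x<5" "y<5" "dc x y = 1" for x y
    using edge_in assms that by blast
  have two: "((i,x),(i,z)) \<in> pg_edges u n ^^ 2" if "x<5" "y<5" "z<5" "dc x y = 1" "dc y z = 1" for x y z
  proof -
    have "((i,x),(i,z)) \<in> pg_edges u n ^^ (1 + 1)"
      by (rule relpow_trans[of _ "(i,y)"]) (use e that in auto)
    then show ?thesis by (simp only: one_add_one)
  qed
  have e1: "((i,x),(i,y)) \<in> pg_edges u n ^^ 1" if "x<5" "y<5" "dc x y = 1" for x y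
    using e[OF that] by simp
  have cs: "(dc j j' = 0 \<and> j = j') \<or> dc j j' = 1 \<or> (dc j j' = 2 \<and> dc j ((j+1) mod 5) = 1 \<and> dc ((j+1) mod 5) j' = 1)
     \<or> (dc j j' = 2 \<and> dc j ((j+4) mod 5) = 1 \<and> dc ((j+4) mod 5) j' = 1)"
    using assms(3,4) by (elim lt5_cases[elim_format] disjE) (simp_all add: dc_def Let_def)
  then show ?thesis
  proof (elim disjE conjE)
    assume "dc j j' = 0" "j = j'" then show ?thesis by simp
  next
    assume "dc j j' = 1" then show ?thesis using e1 assms by simp
  next
    assume "dc j j' = 2" "dc j ((j+1) mod 5) = 1" "dc ((j+1) mod 5) j' = 1"
    then show ?thesis using two[of j "(j+1) mod 5" j'] assms by simp
  next
    assume "dc j j' = 2" "dc j ((j+4) mod 5) = 1" "dc ((j+4) mod 5) j' = 1"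
    then show ?thesis using two[of j "(j+4) mod 5" j'] assms by simp
  qed
qed

definition valid :: "(nat \<Rightarrow> nat) \<Rightarrow> nat \<Rightarrow> bool" where
  "valid u n \<longleftrightarrow> (\<forall>i. 1 \<le> i \<and> i < n \<longrightarrow> u i < 5)"

lemma H_step:
  assumes "i < i'"
  shows "H u i j (Suc i') j' = H u i j i' (u i') + 1 + dc 0 j'"
proof -
  have "(\<Sum>k\<in>{Suc i..<Suc i'}. dc 0 (u k) + 1) = (\<Sum>k\<in>{Suc i..<i'}. dc 0 (u k) + 1) + (dc 0 (u i') + 1)"
    using assms by (subst sum.atLeastLessThan_Suc) auto
  then show ?thesis by (simp add: H_def)
qed

lemma H_base: "H u i j (Suc i) j' = dc j (u i) + 1 + dc 0 j'"
  by (simp add: H_def)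

lemma H_front:
  assumes "Suc i < a"
  shows "H u i j a b = dc j (u i) + dc 0 (u (Suc i)) + 1 + (\<Sum>k\<in>{Suc (Suc i)..<a}. dc 0 (u k) + 1) + 1 + dc 0 b"
proof -
  have "(\<Sum>k\<in>{Suc i..<a}. dc 0 (u k) + 1) = (dc 0 (u (Suc i)) + 1) + (\<Sum>k\<in>{Suc (Suc i)..<a}. dc 0 (u k) + 1)"
    using assms by (subst sum.atLeast_Suc_lessThan) auto
  then show ?thesis by (simp add: H_def)
qed

lemma walk_forward:
  assumes v: "valid u n" and "1 \<le> i" "i < i'" "i' \<le> n" "j < 5" "j' < 5"
  shows "((i,j),(i',j')) \<in> pg_edges u n ^^ H u i j i' j'"
  using assms(3-6)
proof (induction i' arbitrary: j' rule: less_induct)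
  case (less i')
  then obtain m where m: "i' = Suc m" "i \<le> m" by (cases i') auto
  have um: "u m < 5" using v m less.prems assms(2) by (auto simp: valid_def)
  have ui: "u i < 5" using v less.prems assms(2) by (auto simp: valid_def)
  show ?case
  proof (cases "i = m")
    case True
    have w1: "((i,j),(i,u i)) \<in> pg_edges u n ^^ dc j (u i)"
      using cyc_walk[of i n j "u i"] assms less.prems ui by auto
    have w2: "((i,u i),(Suc i,0)) \<in> pg_edges u n ^^ 1"
      using edge_conn1[of i n u] assms less.prems m True by auto
    have w3: "((Suc i,0),(Suc i,j')) \<in> pg_edges u n ^^ dc 0 j'"
      using cyc_walk[of "Suc i" n 0 j'] assms less.prems m True by auto
    show ?thesis using relpow_trans[OF relpow_trans[OF w1 w2] w3] True m by (simp add: H_base)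
  next
    case False
    then have im: "i < m" using m by simp
    have w1: "((i,j),(m,u m)) \<in> pg_edges u n ^^ H u i j m (u m)"
      using less.IH[of m "u m"] im um less.prems m by auto
    have w2: "((m,u m),(Suc m,0)) \<in> pg_edges u n ^^ 1"
      using edge_conn1[of m n u] assms less.prems m im by auto
    have w3: "((Suc m,0),(Suc m,j')) \<in> pg_edges u n ^^ dc 0 j'"
      using cyc_walk[of "Suc m" n 0 j'] assms less.prems m by auto
    show ?thesis using relpow_trans[OF relpow_trans[OF w1 w2] w3] im m by (simp add: H_step)
  qed
qed

lemma pg_edges_sym: "(x,y) \<in> pg_edges u n \<Longrightarrow> (y,x) \<in> pg_edges u n"
  unfolding pg_edges_def by auto

lemma relpow_sym: "(x,y) \<in> pg_edges u n ^^ k \<Longrightarrow> (y,x) \<in> pg_edges u n ^^ k"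
proof (induction k arbitrary: y)
  case 0 then show ?case by simp
next
  case (Suc k)
  then obtain z where z: "(x,z) \<in> pg_edges u n ^^ k" "(z,y) \<in> pg_edges u n" by auto
  have "(y,z) \<in> pg_edges u n ^^ 1" using pg_edges_sym[OF z(2)] by simp
  from relpow_trans[OF this Suc.IH[OF z(1)]] show ?case by simp
qed

lemma walk_Dd:
  assumes v: "valid u n" and "(i,j) \<in> pg_verts n" "(i',j') \<in> pg_verts n"
  shows "((i,j),(i',j')) \<in> pg_edges u n ^^ Dd u (i,j) (i',j')"
proof -
  consider "i = i'" | "i < i'" | "i' < i" by linarith
  then show ?thesis
  proof cases
    case 1 then show ?thesis using assms cyc_walk by (auto simp: pg_verts_def)
  next
    case 2 then show ?thesis using assms walk_forward by (auto simp: pg_verts_def)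
  next
    case 3
    have "((i',j'),(i,j)) \<in> pg_edges u n ^^ H u i' j' i j"
      using 3 assms walk_forward by (auto simp: pg_verts_def)
    then show ?thesis using 3 relpow_sym by auto
  qed
qed

lemma Dd_self[simp]: "Dd u v v = 0"
  by (cases v) auto

lemma conn_Dd:
  assumes "1 \<le> i" "i < n"
  shows "Dd u v (Suc i, 0) = Dd u v (i, u i) + 1 \<or> Dd u v (i, u i) = Dd u v (Suc i, 0) + 1"
proof -
  obtain a b where v: "v = (a,b)" by (cases v)
  consider "a < i" | "a = i" | "a = Suc i" | "Suc i < a" by linarith
  then show ?thesis
  proof cases
    case 1 then show ?thesis by (simp add: v H_step)
  next
    case 2 then show ?thesis by (simp add: v H_base)
  next
    case 3 then show ?thesis by (simp add: v H_base dc_sym)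
  next
    case 4
    have "H u i (u i) a b = H u (Suc i) 0 a b + 1"
      unfolding H_front[OF 4] by (simp add: H_def)
    then show ?thesis using 4 by (simp add: v)
  qed
qed

lemma Dd_lip:
  assumes v: "valid u n" and vv: "v \<in> pg_verts n" and e: "(w', w) \<in> pg_edges u n"
  shows "Dd u v w \<le> Dd u v w' + 1"
proof -
  obtain a b where vab: "v = (a,b)" by (cases v)
  have b: "b < 5" "a \<le> n" using vv by (auto simp: vab pg_verts_def)
  from edge_cases[OF e] show ?thesis
  proof (elim disjE exE conjE)
    fix i j j' assume h: "w' = (i, j)" "w = (i, j')" "1 \<le> i" "i \<le> n" "j < 5" "j' < 5" "dc j j' = 1"
    consider "a = i" | "a < i" | "i < a" by linarith
    then show ?thesis
    proof cases
      case 1 then show ?thesis using h dc_tri[of b j j'] b by (simp add: vab)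
    next
      case 2 then show ?thesis using h dc_tri[of 0 j j'] b by (simp add: vab H_def)
    next
      case 3
      then have "u i < 5" using v h b by (auto simp: valid_def)
      then show ?thesis using 3 h dc_tri[of j' j "u i"] b by (simp add: vab H_def dc_sym)
    qed
  next
    fix i assume h: "1 \<le> i" "i < n" "w' = (i, u i)" "w = (i + 1, 0)"
    then show ?thesis using conn_Dd[OF h(1,2), of u v] by auto
  next
    fix i assume h: "1 \<le> i" "i < n" "w = (i, u i)" "w' = (i + 1, 0)"
    then show ?thesis using conn_Dd[OF h(1,2), of u v] by auto
  qed
qed

lemma Dd_lower:
  assumes v: "valid u n" and vv: "v \<in> pg_verts n"
  shows "(v, w) \<in> pg_edges u n ^^ k \<Longrightarrow> Dd u v w \<le> k"
proof (induction k arbitrary: w)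
  case 0 then show ?case by simp
next
  case (Suc k)
  then obtain z where z: "(v,z) \<in> pg_edges u n ^^ k" "(z,w) \<in> pg_edges u n" by auto
  show ?case using Suc.IH[OF z(1)] Dd_lip[OF v vv z(2)] by simp
qed

lemma pg_dist_eq:
  assumes "valid u n" "v \<in> pg_verts n" "w \<in> pg_verts n"
  shows "pg_dist u n v w = Dd u v w"
  unfolding pg_dist_def
proof (rule Least_equality)
  obtain i j i' j' where "v = (i,j)" "w = (i',j')" by (cases v, cases w)
  then show "(v, w) \<in> pg_edges u n ^^ Dd u v w" using walk_Dd assms by simp
next
  fix k assume "(v, w) \<in> pg_edges u n ^^ k"
  then show "Dd u v w \<le> k" using Dd_lower assms by blast
qed

lemma adj_iff: "(j::nat) < 5 \<Longrightarrow> j' < 5 \<Longrightarrow>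
   (j' = (j+1) mod 5 \<or> j = (j'+1) mod 5) \<longleftrightarrow> (j' = (j+1) mod 5 \<or> j' = (j+4) mod 5)"
  by (elim lt5_cases[elim_format] disjE) auto

lemma nbrs:
  assumes "(i,j) \<in> pg_verts n"
  shows "{w. ((i,j),w) \<in> pg_edges u n} = {(i,(j+1) mod 5),(i,(j+4) mod 5)}
     \<union> (if i<n \<and> j = u i then {(Suc i,0)} else {}) \<union> (if 1<i \<and> j=0 then {(i-1,u(i-1))} else {})"
proof (rule set_eqI)
  fix w :: "nat \<times> nat"
  obtain i' j' where w: "w = (i',j')" by (cases w)
  have ij: "1 \<le> i" "i \<le> n" "j < 5" using assms by (auto simp: pg_verts_def)
  show "w \<in> {w. ((i,j),w) \<in> pg_edges u n} \<longleftrightarrow> w \<in> {(i,(j+1) mod 5),(i,(j+4) mod 5)}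
     \<union> (if i<n \<and> j = u i then {(Suc i,0)} else {}) \<union> (if 1<i \<and> j=0 then {(i-1,u(i-1))} else {})"
  proof
    assume "w \<in> {w. ((i,j),w) \<in> pg_edges u n}"
    then have "((i,j),(i',j')) \<in> pg_edges u n" by (simp add: w)
    then show "w \<in> {(i,(j+1) mod 5),(i,(j+4) mod 5)}
     \<union> (if i<n \<and> j = u i then {(Suc i,0)} else {}) \<union> (if 1<i \<and> j=0 then {(i-1,u(i-1))} else {})"
      unfolding pg_edges_def using adj_iff[of j j'] ij by (auto simp: w)
  next
    assume "w \<in> {(i,(j+1) mod 5),(i,(j+4) mod 5)}
     \<union> (if i<n \<and> j = u i then {(Suc i,0)} else {}) \<union> (if 1<i \<and> j=0 then {(i-1,u(i-1))} else {})"
    then show "w \<in> {w. ((i,j),w) \<in> pg_edges u n}"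
      unfolding pg_edges_def using adj_iff[of j "(j+1) mod 5"] adj_iff[of j "(j+4) mod 5"] ij
      by (auto simp: w split: if_splits)
  qed
qed

lemma sum_prod_split: "(\<Sum>v\<in>A\<times>B. G v) = (\<Sum>i\<in>A. \<Sum>j\<in>B. G (i,j))"
  by (subst sum.cartesian_product) (simp add: case_prod_beta)

lemma pg_deg_eq:
  assumes "(i,j) \<in> pg_verts n"
  shows "pg_deg u n (i,j) = 2 + (if i<n \<and> j = u i then 1 else 0) + (if 1<i \<and> j=0 then 1 else 0)"
proof -
  have ij: "1 \<le> i" "i \<le> n" "j < 5" using assms by (auto simp: pg_verts_def)
  have ne: "(j+1) mod 5 \<noteq> (j+4) mod 5" using ij(3) by (elim lt5_cases[elim_format] disjE) auto
  show ?thesis unfolding pg_deg_def nbrs[OF assms] using ne ij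
    by (auto simp: card_insert_if)
qed

definition dg :: "(nat \<Rightarrow> nat) \<Rightarrow> nat \<Rightarrow> nat \<Rightarrow> nat \<Rightarrow> real" where
  "dg u n i j = 2 + (if i<n \<and> j = u i then 1 else 0) + (if 1<i \<and> j=0 then 1 else 0)"

definition TT :: "(nat \<Rightarrow> nat) \<Rightarrow> nat \<Rightarrow> nat \<Rightarrow> nat \<Rightarrow> real" where
  "TT u n i i' = (\<Sum>j<5. \<Sum>j'<5. dg u n i j * dg u n i' j' * real (Dd u (i,j) (i',j')))"

lemma gut_TT:
  assumes v: "valid u n"
  shows "gut u n = (\<Sum>i\<in>{1..n}. \<Sum>i'\<in>{1..n}. TT u n i i') / 2"
proof -
  let ?V = "pg_verts n"
  let ?f = "\<lambda>v w. real (pg_deg u n v * pg_deg u n w * pg_dist u n v w)"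
  have fin: "finite ?V" by (simp add: pg_verts_def)
  have 1: "(\<Sum>w\<in>?V - {v}. ?f v w) = (\<Sum>w\<in>?V. ?f v w)" if "v \<in> ?V" for v
  proof -
    have "(\<Sum>w\<in>?V. ?f v w) = ?f v v + (\<Sum>w\<in>?V - {v}. ?f v w)"
      using fin that by (rule sum.remove)
    moreover have "?f v v = 0" using pg_dist_eq[OF v that that] by simp
    ultimately show ?thesis by simp
  qed
  have 2: "?f v w = dg u n (fst v) (snd v) * dg u n (fst w) (snd w) * real (Dd u v w)"
    if "v \<in> ?V" "w \<in> ?V" for v w
    using pg_dist_eq[OF v that] pg_deg_eq[of "fst v" "snd v" n u] pg_deg_eq[of "fst w" "snd w" n u] that
    by (simp add: dg_def)
  have "(\<Sum>v\<in>?V. \<Sum>w\<in>?V - {v}. ?f v w) = (\<Sum>v\<in>?V. \<Sum>w\<in>?V. dg u n (fst v) (snd v) * dg u n (fst w) (snd w) * real (Dd u v w))"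
    using 1 2 by (auto intro!: sum.cong)
  also have "\<dots> = (\<Sum>i\<in>{1..n}. \<Sum>j<5. \<Sum>i'\<in>{1..n}. \<Sum>j'<5. dg u n i j * dg u n i' j' * real (Dd u (i,j) (i',j')))"
    unfolding pg_verts_def sum_prod_split by simp
  also have "\<dots> = (\<Sum>i\<in>{1..n}. \<Sum>i'\<in>{1..n}. TT u n i i')"
    unfolding TT_def by (rule sum.cong[OF refl], rule sum.swap)
  finally show ?thesis unfolding gut_def by simp
qed

lemma Dd_sym: "Dd u v w = Dd u w v"
  by (cases v, cases w) (auto simp: dc_sym)

lemma TT_sym: "TT u n i i' = TT u n i' i"
  unfolding TT_def by (subst sum.swap) (simp add: Dd_sym mult_ac)

lemma sym_split:
  fixes T :: "nat \<Rightarrow> nat \<Rightarrow> real"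
  assumes fin: "finite A" and sym: "\<And>i i'. T i i' = T i' i"
  shows "(\<Sum>i\<in>A. \<Sum>i'\<in>A. T i i') = (\<Sum>i\<in>A. T i i) + 2 * (\<Sum>i\<in>A. \<Sum>i'\<in>{i'\<in>A. i < i'}. T i i')"
proof -
  have split: "(\<Sum>i'\<in>A. T i i') = T i i + (\<Sum>i'\<in>{i'\<in>A. i < i'}. T i i') + (\<Sum>i'\<in>{i'\<in>A. i' < i}. T i i')"
    if "i \<in> A" for i
  proof -
    have "A = insert i ({i'\<in>A. i < i'} \<union> {i'\<in>A. i' < i})" using that by auto
    moreover have "i \<notin> {i'\<in>A. i < i'} \<union> {i'\<in>A. i' < i}" by auto
    moreover have "{i'\<in>A. i < i'} \<inter> {i'\<in>A. i' < i} = {}" by auto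
    ultimately show ?thesis using fin
      by (metis (no_types, lifting) add.assoc finite_Un finite_insert sum.insert sum.union_disjoint)
  qed
  have swap: "(\<Sum>i\<in>A. \<Sum>i'\<in>{i'\<in>A. i' < i}. T i i') = (\<Sum>i'\<in>A. \<Sum>i\<in>{i\<in>A. i' < i}. T i i')"
    by (rule sum.swap_restrict[OF fin fin])
  have "(\<Sum>i\<in>A. \<Sum>i'\<in>A. T i i') = (\<Sum>i\<in>A. T i i) + (\<Sum>i\<in>A. \<Sum>i'\<in>{i'\<in>A. i < i'}. T i i')
      + (\<Sum>i\<in>A. \<Sum>i'\<in>{i'\<in>A. i' < i}. T i i')"
    by (simp add: split sum.distrib)
  also have "(\<Sum>i\<in>A. \<Sum>i'\<in>{i'\<in>A. i' < i}. T i i') = (\<Sum>i\<in>A. \<Sum>i'\<in>{i'\<in>A. i < i'}. T i i')"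
    unfolding swap by (simp add: sym)
  finally show ?thesis by simp
qed

definition Wf :: "(nat \<Rightarrow> nat) \<Rightarrow> nat \<Rightarrow> nat \<Rightarrow> real" where
  "Wf u n i = (\<Sum>j<5. dg u n i j)"
definition Lf :: "(nat \<Rightarrow> nat) \<Rightarrow> nat \<Rightarrow> nat \<Rightarrow> real" where
  "Lf u n i = (\<Sum>j<5. dg u n i j * dc j (u i))"
definition Rf :: "(nat \<Rightarrow> nat) \<Rightarrow> nat \<Rightarrow> nat \<Rightarrow> real" where
  "Rf u n i = (\<Sum>j<5. dg u n i j * dc 0 j)"
definition Mf :: "(nat \<Rightarrow> nat) \<Rightarrow> nat \<Rightarrow> nat \<Rightarrow> real" where
  "Mf u i i' = (\<Sum>k\<in>{Suc i..<i'}. real (dc 0 (u k)) + 1)"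

lemma sum5: "(\<Sum>j<(5::nat). f j) = f 0 + f 1 + f 2 + f 3 + (f 4 :: real)"
  by (simp add: numeral_eq_Suc)

lemma bilin:
  fixes a b x y :: "nat \<Rightarrow> real"
  shows "(\<Sum>j<5. \<Sum>j'<5. a j * b j' * (x j + c + y j')) =
     (\<Sum>j<5. a j * x j) * (\<Sum>j'<5. b j') + c * (\<Sum>j<5. a j) * (\<Sum>j'<5. b j') + (\<Sum>j<5. a j) * (\<Sum>j'<5. b j' * y j')"
  unfolding sum5 by (simp add: algebra_simps)

lemma TT_lt:
  assumes "i < i'"
  shows "TT u n i i' = Lf u n i * Wf u n i' + Wf u n i * Wf u n i' * (Mf u i i' + 1) + Wf u n i * Rf u n i'"
proof -
  have "TT u n i i' = (\<Sum>j<5. \<Sum>j'<5. dg u n i j * dg u n i' j' * (real (dc j (u i)) + (Mf u i i' + 1) + real (dc 0 j')))"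
    unfolding TT_def using assms by (simp add: H_def Mf_def algebra_simps)
  also have "\<dots> = Lf u n i * Wf u n i' + (Mf u i i' + 1) * Wf u n i * Wf u n i' + Wf u n i * Rf u n i'"
    unfolding bilin Lf_def Wf_def Rf_def ..
  finally show ?thesis by (simp add: algebra_simps)
qed

lemma Wf_eq: "valid u n \<Longrightarrow> 1 \<le> i \<Longrightarrow> i \<le> n \<Longrightarrow>
   Wf u n i = 10 + (if i < n then 1 else 0) + (if 1 < i then 1 else 0)"
  unfolding Wf_def sum5 dg_def valid_def
  apply (cases "i < n")
   apply (subgoal_tac "u i < 5")
    apply (drule lt5_cases)
  by auto

lemma Lf_eq: "valid u n \<Longrightarrow> 1 \<le> i \<Longrightarrow> i < n \<Longrightarrow>
   Lf u n i = 12 + (if 1 < i then real (dc 0 (u i)) else 0)"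
  unfolding Lf_def sum5 dg_def valid_def
  apply (subgoal_tac "u i < 5")
   apply (drule lt5_cases)
  by (auto simp: dc_def)

lemma Rf_eq: "valid u n \<Longrightarrow> 1 \<le> i \<Longrightarrow> i \<le> n \<Longrightarrow>
   Rf u n i = 12 + (if i < n then real (dc 0 (u i)) else 0)"
  unfolding Rf_def sum5 dg_def valid_def
  apply (cases "i < n")
   apply (subgoal_tac "u i < 5")
    apply (drule lt5_cases)
  by (auto simp: dc_def)

lemma TT_diag: "valid u n \<Longrightarrow> 1 \<le> i \<Longrightarrow> i \<le> n \<Longrightarrow>
   TT u n i i = 120 + (if i < n then 24 else 0) + (if 1 < i then 24 else 0)
      + (if i < n \<and> 1 < i then 2 * real (dc 0 (u i)) else 0)"
  unfolding TT_def sum5 dg_def valid_def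
  apply (cases "i < n")
   apply (subgoal_tac "u i < 5")
    apply (drule lt5_cases)
  by (auto simp: dc_def)

definition ee :: "nat \<Rightarrow> nat \<Rightarrow> real" where "ee n i = (if i < n then 1 else 0)"
definition ss :: "nat \<Rightarrow> real" where "ss i = (if 1 < i then 1 else 0)"
definition Wc :: "nat \<Rightarrow> nat \<Rightarrow> real" where "Wc n i = 10 + ee n i + ss i"
definition dd :: "(nat \<Rightarrow> nat) \<Rightarrow> nat \<Rightarrow> real" where "dd u k = real (dc 0 (u k))"
definition Md :: "(nat \<Rightarrow> nat) \<Rightarrow> nat \<Rightarrow> nat \<Rightarrow> real" where
  "Md u i i' = (\<Sum>k\<in>{Suc i..<i'}. dd u k)"
definition cp :: "nat \<Rightarrow> nat \<Rightarrow> nat \<Rightarrow> real" where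
  "cp n i i' = 12 * Wc n i' + Wc n i * Wc n i' * (real (i' - Suc i) + 1) + 12 * Wc n i"
definition PP :: "nat \<Rightarrow> real" where
  "PP n = (\<Sum>i\<in>{1..n}. 120 + 24 * ee n i + 24 * ss i)
        + 2 * (\<Sum>i\<in>{1..n}. \<Sum>i'\<in>{i'\<in>{1..n}. i < i'}. cp n i i')"
definition dpart :: "(nat \<Rightarrow> nat) \<Rightarrow> nat \<Rightarrow> nat \<Rightarrow> nat \<Rightarrow> real" where
  "dpart u n i i' = ss i * dd u i * Wc n i' + Wc n i * Wc n i' * Md u i i' + Wc n i * ee n i' * dd u i'"

lemma TT_lt2:
  assumes v: "valid u n" and "1 \<le> i" "i < i'" "i' \<le> n"
  shows "TT u n i i' = cp n i i' + dpart u n i i'"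
proof -
  have W: "Wf u n i = Wc n i" "Wf u n i' = Wc n i'"
    using Wf_eq[OF v] assms by (auto simp: Wc_def ee_def ss_def)
  have L: "Lf u n i = 12 + ss i * dd u i" using Lf_eq[OF v, of i] assms by (simp add: ss_def dd_def)
  have R: "Rf u n i' = 12 + ee n i' * dd u i'" using Rf_eq[OF v, of i'] assms by (simp add: ee_def dd_def)
  have M: "Mf u i i' = Md u i i' + real (i' - Suc i)"
    unfolding Mf_def Md_def dd_def by (simp add: sum.distrib)
  show ?thesis unfolding TT_lt[OF assms(3)] W L R M cp_def dpart_def by (simp add: algebra_simps)
qed

lemma TT_diag2:
  assumes v: "valid u n" and "1 \<le> i" "i \<le> n"
  shows "TT u n i i = (120 + 24 * ee n i + 24 * ss i) + 2 * ee n i * ss i * dd u i"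
  using TT_diag[OF assms] by (simp add: ee_def ss_def dd_def)

lemma gut_split:
  assumes v: "valid u n"
  shows "2 * gut u n = PP n + (\<Sum>i\<in>{1..n}. 2 * ee n i * ss i * dd u i)
      + 2 * (\<Sum>i\<in>{1..n}. \<Sum>i'\<in>{i'\<in>{1..n}. i < i'}. dpart u n i i')"
proof -
  have "2 * gut u n = (\<Sum>i\<in>{1..n}. \<Sum>i'\<in>{1..n}. TT u n i i')"
    using gut_TT[OF v] by simp
  also have "\<dots> = (\<Sum>i\<in>{1..n}. TT u n i i) + 2 * (\<Sum>i\<in>{1..n}. \<Sum>i'\<in>{i'\<in>{1..n}. i < i'}. TT u n i i')"
    by (rule sym_split) (auto simp: TT_sym)
  also have "(\<Sum>i\<in>{1..n}. TT u n i i) = (\<Sum>i\<in>{1..n}. 120 + 24 * ee n i + 24 * ss i) + (\<Sum>i\<in>{1..n}. 2 * ee n i * ss i * dd u i)"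
    by (simp add: TT_diag2[OF v] sum.distrib)
  also have "(\<Sum>i\<in>{1..n}. \<Sum>i'\<in>{i'\<in>{1..n}. i < i'}. TT u n i i')
     = (\<Sum>i\<in>{1..n}. \<Sum>i'\<in>{i'\<in>{1..n}. i < i'}. cp n i i') + (\<Sum>i\<in>{1..n}. \<Sum>i'\<in>{i'\<in>{1..n}. i < i'}. dpart u n i i')"
    by (simp add: TT_lt2[OF v] sum.distrib)
  finally show ?thesis unfolding PP_def by (simp add: algebra_simps)
qed

lemma set_gt: "{i'\<in>{1..n}. k < i'} = {Suc k..n}" if "1 \<le> k" for k n :: nat
  using that by auto

lemma set_lt: "{i\<in>{1..n}. i < k} = {1..<k}" if "k \<le> n" for k n :: nat
  using that by auto

lemma Asum:
  assumes "1 \<le> k" "k \<le> n"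
  shows "(\<Sum>i'\<in>{i'\<in>{1..n}. k < i'}. Wc n i') = (if k < n then 12 * (real n - real k) - 1 else 0)"
proof (cases "k < n")
  case True
  have "{Suc k..n} = insert n {Suc k..<n}" using True by auto
  then have "(\<Sum>i'\<in>{Suc k..n}. Wc n i') = Wc n n + (\<Sum>i'\<in>{Suc k..<n}. Wc n i')" by simp
  also have "(\<Sum>i'\<in>{Suc k..<n}. Wc n i') = (\<Sum>i'\<in>{Suc k..<n}. 12)"
    using assms by (intro sum.cong) (auto simp: Wc_def ee_def ss_def)
  finally show ?thesis unfolding set_gt[OF assms(1)] using True assms by (simp add: Wc_def ee_def ss_def of_nat_diff)
next
  case False
  then show ?thesis unfolding set_gt[OF assms(1)] using assms by simp
qed

lemma Bsum:
  assumes "1 \<le> k" "k \<le> n"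
  shows "(\<Sum>i\<in>{i\<in>{1..n}. i < k}. Wc n i) = (if 1 < k then 12 * (real k - 1) - 1 else 0)"
proof (cases "1 < k")
  case True
  have "{1..<k} = insert 1 {2..<k}" using True by auto
  then have "(\<Sum>i\<in>{1..<k}. Wc n i) = Wc n 1 + (\<Sum>i\<in>{2..<k}. Wc n i)" by simp
  also have "(\<Sum>i\<in>{2..<k}. Wc n i) = (\<Sum>i\<in>{2..<k}. 12)"
    using assms by (intro sum.cong) (auto simp: Wc_def ee_def ss_def)
  finally show ?thesis unfolding set_lt[OF assms(2)] using True assms by (simp add: Wc_def ee_def ss_def of_nat_diff)
next
  case False
  then show ?thesis unfolding set_lt[OF assms(2)] using assms by simp
qed

lemma triple_swap:
  fixes F :: "nat \<Rightarrow> nat \<Rightarrow> nat \<Rightarrow> real" and I :: "nat set"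
  assumes I: "I = {1..n}"
  shows "(\<Sum>i\<in>I. \<Sum>i'\<in>{i'\<in>I. i < i'}. \<Sum>k\<in>{Suc i..<i'}. F i i' k)
       = (\<Sum>k\<in>I. \<Sum>i\<in>{i\<in>I. i < k}. \<Sum>i'\<in>{i'\<in>I. k < i'}. F i i' k)"
proof -
  have fin: "finite I" "finite {i'\<in>I. i < i'}" "finite {k\<in>I. i < k}" for i using I by auto
  have inner: "(\<Sum>i'\<in>{i'\<in>I. i < i'}. \<Sum>k\<in>{Suc i..<i'}. F i i' k)
      = (\<Sum>k\<in>{k\<in>I. i < k}. \<Sum>i'\<in>{i'\<in>I. k < i'}. F i i' k)" if "i \<in> I" for i
  proof -
    have "(\<Sum>i'\<in>{i'\<in>I. i < i'}. \<Sum>k\<in>{Suc i..<i'}. F i i' k)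
      = (\<Sum>i'\<in>{i'\<in>I. i < i'}. \<Sum>k\<in>{k\<in>{k\<in>I. i < k}. k < i'}. F i i' k)"
    proof (intro sum.cong refl)
      fix i' assume "i' \<in> {i'\<in>I. i < i'}"
      then show "{Suc i..<i'} = {k\<in>{k\<in>I. i < k}. k < i'}" using that I by auto
    qed
    also have "\<dots> = (\<Sum>k\<in>{k\<in>I. i < k}. \<Sum>i'\<in>{i'\<in>{i'\<in>I. i < i'}. k < i'}. F i i' k)"
      by (rule sum.swap_restrict[OF fin(2) fin(3)])
    also have "\<dots> = (\<Sum>k\<in>{k\<in>I. i < k}. \<Sum>i'\<in>{i'\<in>I. k < i'}. F i i' k)"
    proof (intro sum.cong refl)
      fix k assume "k \<in> {k\<in>I. i < k}"
      then show "{i'\<in>{i'\<in>I. i < i'}. k < i'} = {i'\<in>I. k < i'}" by auto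
    qed
    finally show ?thesis .
  qed
  have "(\<Sum>i\<in>I. \<Sum>i'\<in>{i'\<in>I. i < i'}. \<Sum>k\<in>{Suc i..<i'}. F i i' k)
     = (\<Sum>i\<in>I. \<Sum>k\<in>{k\<in>I. i < k}. \<Sum>i'\<in>{i'\<in>I. k < i'}. F i i' k)"
    by (rule sum.cong[OF refl], erule inner)
  also have "\<dots> = (\<Sum>k\<in>I. \<Sum>i\<in>{i\<in>I. i < k}. \<Sum>i'\<in>{i'\<in>I. k < i'}. F i i' k)"
    by (rule sum.swap_restrict[OF fin(1) fin(1)])
  finally show ?thesis .
qed

lemma dpart_sum:
  "(\<Sum>i\<in>{1..n}. 2 * ee n i * ss i * dd u i)
      + 2 * (\<Sum>i\<in>{1..n}. \<Sum>i'\<in>{i'\<in>{1..n}. i < i'}. dpart u n i i')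
   = (\<Sum>k\<in>{1..n}. 288 * (real k - 1) * (real n - real k) * dd u k)"
proof -
  let ?I = "{1..n}"
  define A where "A k = (\<Sum>i'\<in>{i'\<in>?I. k < i'}. Wc n i')" for k
  define B where "B k = (\<Sum>i\<in>{i\<in>?I. i < k}. Wc n i)" for k
  have fin: "finite {i'\<in>?I. i < i'}" for i by auto
  have p1: "(\<Sum>i\<in>?I. \<Sum>i'\<in>{i'\<in>?I. i < i'}. ss i * dd u i * Wc n i') = (\<Sum>k\<in>?I. ss k * dd u k * A k)"
    unfolding A_def by (simp add: sum_distrib_left)
  have p2: "(\<Sum>i\<in>?I. \<Sum>i'\<in>{i'\<in>?I. i < i'}. Wc n i * ee n i' * dd u i') = (\<Sum>k\<in>?I. ee n k * dd u k * B k)"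
  proof -
    have "(\<Sum>i\<in>?I. \<Sum>i'\<in>{i'\<in>?I. i < i'}. Wc n i * ee n i' * dd u i')
       = (\<Sum>i'\<in>?I. \<Sum>i\<in>{i\<in>?I. i < i'}. Wc n i * ee n i' * dd u i')"
      by (rule sum.swap_restrict) auto
    then show ?thesis unfolding B_def by (simp add: sum_distrib_left sum_distrib_right mult_ac)
  qed
  have p3: "(\<Sum>i\<in>?I. \<Sum>i'\<in>{i'\<in>?I. i < i'}. Wc n i * Wc n i' * Md u i i') = (\<Sum>k\<in>?I. dd u k * B k * A k)"
  proof -
    have "(\<Sum>i\<in>?I. \<Sum>i'\<in>{i'\<in>?I. i < i'}. Wc n i * Wc n i' * Md u i i')
        = (\<Sum>i\<in>?I. \<Sum>i'\<in>{i'\<in>?I. i < i'}. \<Sum>k\<in>{Suc i..<i'}. Wc n i * Wc n i' * dd u k)"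
      unfolding Md_def by (simp add: sum_distrib_left)
    also have "\<dots> = (\<Sum>k\<in>?I. \<Sum>i\<in>{i\<in>?I. i < k}. \<Sum>i'\<in>{i'\<in>?I. k < i'}. Wc n i * Wc n i' * dd u k)"
      by (rule triple_swap[OF refl])
    also have "\<dots> = (\<Sum>k\<in>?I. dd u k * B k * A k)"
      unfolding A_def B_def by (simp add: sum_distrib_left sum_distrib_right mult_ac)
    finally show ?thesis .
  qed
  have "2 * (\<Sum>i\<in>?I. \<Sum>i'\<in>{i'\<in>?I. i < i'}. dpart u n i i')
     = 2 * (\<Sum>k\<in>?I. ss k * dd u k * A k) + 2 * (\<Sum>k\<in>?I. dd u k * B k * A k) + 2 * (\<Sum>k\<in>?I. ee n k * dd u k * B k)"
    unfolding dpart_def p1[symmetric] p2[symmetric] p3[symmetric] by (simp add: sum.distrib algebra_simps)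
  then have "(\<Sum>i\<in>?I. 2 * ee n i * ss i * dd u i) + 2 * (\<Sum>i\<in>?I. \<Sum>i'\<in>{i'\<in>?I. i < i'}. dpart u n i i')
      = (\<Sum>k\<in>?I. 2 * dd u k * (ee n k * ss k + ss k * A k + B k * A k + ee n k * B k))"
    by (simp add: sum.distrib sum_distrib_left algebra_simps)
  also have "\<dots> = (\<Sum>k\<in>?I. 288 * (real k - 1) * (real n - real k) * dd u k)"
  proof (intro sum.cong refl)
    fix k assume k: "k \<in> ?I"
    then have "1 \<le> k" "k \<le> n" by auto
    then show "2 * dd u k * (ee n k * ss k + ss k * A k + B k * A k + ee n k * B k) = 288 * (real k - 1) * (real n - real k) * dd u k"
      unfolding A_def B_def Asum[OF \<open>1 \<le> k\<close> \<open>k \<le> n\<close>] Bsum[OF \<open>1 \<le> k\<close> \<open>k \<le> n\<close>]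
      by (auto simp: ee_def ss_def algebra_simps)
  qed
  finally show ?thesis .
qed

theorem gut_formula:
  assumes v: "valid u n"
  shows "gut u n = PP n / 2 + (\<Sum>k\<in>{1..n}. 144 * (real k - 1) * (real n - real k) * dd u k)"
proof -
  have "2 * gut u n = PP n + (\<Sum>k\<in>{1..n}. 288 * (real k - 1) * (real n - real k) * dd u k)"
    using gut_split[OF v] dpart_sum[of n u] by simp
  moreover have "(\<Sum>k\<in>{1..n}. 288 * (real k - 1) * (real n - real k) * dd u k) = 2 * (\<Sum>k\<in>{1..n}. 144 * (real k - 1) * (real n - real k) * dd u k)"
    by (subst sum_distrib_left) (intro sum.cong refl, simp add: algebra_simps)
  ultimately show ?thesis by simp
qed

definition bb :: "nat \<Rightarrow> nat \<Rightarrow> real" where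
  "bb n k = 144 * (real k - 1) * (real n - real k)"

definition CC :: "nat \<Rightarrow> real" where
  "CC n = PP n / 2 + (\<Sum>k\<in>{2..<n}. 2 * bb n k)"

definition Ppoly :: "nat \<Rightarrow> real \<Rightarrow> real" where
  "Ppoly n x = (let N = real n - 2;
      A1 = N*(N+1)*(2*N+1)/6; S3 = N^2*(N+1)^2/4; S4 = N*(N+1)*(2*N+1)*(3*N^2+3*N-1)/30;
      A2 = S3 + A1; A3 = S4 + 2*S3 + A1 in x*x*A1 - 2*x*A2 + A3)"

lemma Ppoly_sum: "n \<ge> 1 \<Longrightarrow> (\<Sum>k\<in>{2..<n}. (real k - 1)^2 * (x - real k)^2) = Ppoly n x"
proof (induction n rule: dec_induct)
  case base then show ?case by (simp add: Ppoly_def)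
next
  case (step n)
  have "(\<Sum>k\<in>{2..<Suc n}. (real k - 1)^2 * (x - real k)^2) = (\<Sum>k\<in>{2..<n}. (real k - 1)^2 * (x - real k)^2) + (real n - 1)^2 * (x - real n)^2"
  proof (cases "n \<ge> 2")
    case True then show ?thesis by (simp add: sum.atLeastLessThan_Suc)
  next
    case False then have "n = 1" using step by simp
    then show ?thesis by simp
  qed
  also have "\<dots> = Ppoly (Suc n) x" unfolding step.IH
    unfolding Ppoly_def Let_def by (simp add: field_simps power2_eq_square power3_eq_cube)
  finally show ?case .
qed

lemma bb_sq_sum: "n \<ge> 1 \<Longrightarrow> (\<Sum>k\<in>{2..<n}. (bb n k)^2) = 144^2 * (real n^5 - 5*real n^4 + 10*real n^3 - 10*real n^2 + 4*real n) / 30"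
proof -
  assume n: "n \<ge> 1"
  have "(\<Sum>k\<in>{2..<n}. (bb n k)^2) = 144^2 * (\<Sum>k\<in>{2..<n}. (real k - 1)^2 * (real n - real k)^2)"
    unfolding bb_def sum_distrib_left by (rule sum.cong[OF refl]) (simp only: power_mult_distrib mult.assoc)
  also have "\<dots> = 144^2 * Ppoly n (real n)" using Ppoly_sum[OF n] by simp
  also have "\<dots> = 144^2 * (real n^5 - 5*real n^4 + 10*real n^3 - 10*real n^2 + 4*real n) / 30"
    unfolding Ppoly_def Let_def by (simp add: field_simps power2_eq_square power3_eq_cube power4_eq_xxxx) algebra
  finally show ?thesis .
qed

locale pgs = prob_space M for M :: "'a measure" +
  fixes c :: "nat \<Rightarrow> 'a \<Rightarrow> nat" and p :: real
  assumes meas: "\<And>n. c n \<in> measurable M (count_space UNIV)"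
    and u1: "\<And>\<omega>. \<omega> \<in> space M \<Longrightarrow> c 1 \<omega> < 5"
    and un: "\<And>n \<omega>. n \<ge> 2 \<Longrightarrow> \<omega> \<in> space M \<Longrightarrow> c n \<omega> \<in> {1, 2, 3, 4}"
    and hyp1: "indep_vars (\<lambda>_. count_space UNIV) (\<lambda>n \<omega>. c n \<omega> \<in> {1, 4}) {2..}"
    and pp: "\<And>n. n \<ge> 2 \<Longrightarrow> measure M {\<omega> \<in> space M. c n \<omega> \<in> {1, 4}} = p"
    and p0: "0 < p" and p1: "p < 1"
begin

lemmas meas_m[measurable] = meas

definition Z :: "nat \<Rightarrow> 'a \<Rightarrow> real" where "Z k \<omega> = (if c k \<omega> \<in> {1,4} then 1 else 0)"
definition Y :: "nat \<Rightarrow> 'a \<Rightarrow> real" where "Y k \<omega> = Z k \<omega> - p"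

lemma valid_c: "\<omega> \<in> space M \<Longrightarrow> valid (\<lambda>i. c i \<omega>) n"
  unfolding valid_def
proof (intro allI impI)
  fix i assume "\<omega> \<in> space M" "1 \<le> i \<and> i < n"
  then show "c i \<omega> < 5" using u1[of \<omega>] un[of i \<omega>] by (cases "i = 1") auto
qed

lemma dd_c: "\<omega> \<in> space M \<Longrightarrow> k \<ge> 2 \<Longrightarrow> dd (\<lambda>i. c i \<omega>) k = 2 - Z k \<omega>"
  using un[of k \<omega>] by (auto simp: dd_def Z_def dc_def)

lemma G_repr:
  assumes "\<omega> \<in> space M"
  shows "gut (\<lambda>i. c i \<omega>) n = CC n - (\<Sum>k\<in>{2..<n}. bb n k * Z k \<omega>)"
proof -
  have "(\<Sum>k\<in>{1..n}. 144 * (real k - 1) * (real n - real k) * dd (\<lambda>i. c i \<omega>) k)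
      = (\<Sum>k\<in>{2..<n}. 144 * (real k - 1) * (real n - real k) * dd (\<lambda>i. c i \<omega>) k)"
  proof (rule sum.mono_neutral_right)
    show "\<forall>i\<in>{1..n} - {2..<n}. 144 * (real i - 1) * (real n - real i) * dd (\<lambda>i. c i \<omega>) i = 0"
    proof
      fix i assume "i \<in> {1..n} - {2..<n}"
      then have "i = 1 \<or> i = n" by auto
      then show "144 * (real i - 1) * (real n - real i) * dd (\<lambda>i. c i \<omega>) i = 0" by auto
    qed
  qed auto
  also have "\<dots> = (\<Sum>k\<in>{2..<n}. bb n k * (2 - Z k \<omega>))"
    using dd_c[OF assms] by (intro sum.cong refl) (auto simp: bb_def)
  also have "\<dots> = (\<Sum>k\<in>{2..<n}. 2 * bb n k) - (\<Sum>k\<in>{2..<n}. bb n k * Z k \<omega>)"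
    by (simp add: sum_subtractf algebra_simps)
  finally show ?thesis using gut_formula[OF valid_c[OF assms, of n]] by (simp add: CC_def)
qed

lemma Z_meas[measurable]: "Z k \<in> borel_measurable M"
proof -
  have "(\<lambda>x::nat. if x \<in> {1,4} then 1 else (0::real)) \<in> measurable (count_space UNIV) borel" by simp
  from measurable_compose[OF meas this] show ?thesis unfolding Z_def[abs_def] by simp
qed

lemma Y_meas[measurable]: "Y k \<in> borel_measurable M"
  unfolding Y_def by measurable

lemma Z_bound: "\<bar>Z k \<omega>\<bar> \<le> 1" by (simp add: Z_def)
lemma Y_bound: "\<bar>Y k \<omega>\<bar> \<le> 1" using p0 p1 by (simp add: Y_def Z_def)

lemma Z_int[simp]: "integrable M (Z k)"
  by (rule integrable_const_bound[where B=1]) (auto simp: Z_bound)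
lemma Y_int[simp]: "integrable M (Y k)"
  by (rule integrable_const_bound[where B=1]) (auto simp: Y_bound)

lemma indep_Y: "indep_vars (\<lambda>_. borel) Y {2..}"
proof -
  have "indep_vars (\<lambda>_. borel) (\<lambda>i x. (\<lambda>b. (if b then 1 else 0) - p :: real) ((\<lambda>n \<omega>. c n \<omega> \<in> {1, 4}) i x)) {2..}"
    by (rule indep_vars_compose2[OF hyp1]) simp
  then show ?thesis unfolding Y_def Z_def by (simp add: if_distrib)
qed

lemma EZ: "k \<ge> 2 \<Longrightarrow> expectation (Z k) = p"
proof -
  assume k: "k \<ge> 2"
  have "c k -` {1,4} \<inter> space M \<in> sets M" by (rule measurable_sets[OF meas]) simp
  moreover have "{\<omega> \<in> space M. c k \<omega> \<in> {1, 4}} = c k -` {1,4} \<inter> space M" by auto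
  ultimately have s: "{\<omega> \<in> space M. c k \<omega> \<in> {1, 4}} \<in> sets M" by simp
  have "expectation (Z k) = expectation (indicator {\<omega> \<in> space M. c k \<omega> \<in> {1, 4}})"
  proof (rule Bochner_Integration.integral_cong[OF refl])
    fix \<omega> assume "\<omega> \<in> space M"
    then show "Z k \<omega> = indicator {\<omega> \<in> space M. c k \<omega> \<in> {1, 4}} \<omega>"
      unfolding Z_def indicator_def by simp
  qed
  also have "\<dots> = p" using pp[OF k] s by simp
  finally show ?thesis .
qed

lemma EY: "k \<ge> 2 \<Longrightarrow> expectation (Y k) = 0"
  unfolding Y_def using EZ by (simp add: prob_space)

lemma Z_sq: "Z k \<omega> ^ 2 = Z k \<omega>" by (simp add: Z_def)

lemma EY2: "k \<ge> 2 \<Longrightarrow> expectation (\<lambda>\<omega>. Y k \<omega> ^ 2) = p * (1 - p)"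
proof -
  assume k: "k \<ge> 2"
  have "(\<lambda>\<omega>. Y k \<omega> ^ 2) = (\<lambda>\<omega>. (1 - 2 * p) * Z k \<omega> + p^2)"
    by (rule ext) (simp add: Y_def power2_diff Z_sq algebra_simps)
  then show ?thesis using EZ[OF k] by (simp add: prob_space algebra_simps power2_eq_square)
qed

lemma EYY: "k \<ge> 2 \<Longrightarrow> l \<ge> 2 \<Longrightarrow> k \<noteq> l \<Longrightarrow> expectation (\<lambda>\<omega>. Y k \<omega> * Y l \<omega>) = 0"
proof -
  assume kl: "k \<ge> 2" "l \<ge> 2" "k \<noteq> l"
  have ind: "indep_vars (\<lambda>_. borel) Y {k, l}"
    by (rule indep_vars_subset[OF indep_Y]) (use kl in auto)
  have "expectation (\<lambda>\<omega>. \<Prod>i\<in>{k,l}. Y i \<omega>) = (\<Prod>i\<in>{k,l}. expectation (Y i))"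
    by (rule indep_vars_lebesgue_integral[OF _ ind]) auto
  then show ?thesis using kl EY by simp
qed

lemma YY_int[simp]: "integrable M (\<lambda>\<omega>. Y k \<omega> * Y l \<omega>)"
  by (rule integrable_const_bound[where B=1]) (auto simp: abs_mult intro!: mult_le_one Y_bound abs_ge_zero)

lemma E_sq_sum:
  assumes K: "finite K" "K \<subseteq> {2..}"
  shows "expectation (\<lambda>\<omega>. (\<Sum>k\<in>K. b k * Y k \<omega>)^2) = p * (1 - p) * (\<Sum>k\<in>K. (b k)^2)"
proof -
  have "(\<lambda>\<omega>. (\<Sum>k\<in>K. b k * Y k \<omega>)^2) = (\<lambda>\<omega>. \<Sum>k\<in>K. \<Sum>l\<in>K. b k * b l * (Y k \<omega> * Y l \<omega>))"
    by (rule ext) (simp add: power2_eq_square sum_product algebra_simps)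
  then have "expectation (\<lambda>\<omega>. (\<Sum>k\<in>K. b k * Y k \<omega>)^2) = (\<Sum>k\<in>K. \<Sum>l\<in>K. b k * b l * expectation (\<lambda>\<omega>. Y k \<omega> * Y l \<omega>))"
    by (simp add: integral_sum)
  also have "\<dots> = (\<Sum>k\<in>K. b k * b k * (p * (1 - p)))"
  proof (rule sum.cong[OF refl])
    fix k assume k: "k \<in> K"
    have "(\<Sum>l\<in>K. b k * b l * expectation (\<lambda>\<omega>. Y k \<omega> * Y l \<omega>)) = b k * b k * expectation (\<lambda>\<omega>. Y k \<omega> * Y k \<omega>)"
    proof (rule sum.remove[THEN trans])
      show "finite K" "k \<in> K" by (fact K(1), fact k)
      have "(\<Sum>l\<in>K - {k}. b k * b l * expectation (\<lambda>\<omega>. Y k \<omega> * Y l \<omega>)) = 0"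
      proof (intro sum.neutral ballI)
        fix l assume "l \<in> K - {k}"
        then have "l \<ge> 2" "k \<ge> 2" "k \<noteq> l" using K k by auto
        then show "b k * b l * expectation (\<lambda>\<omega>. Y k \<omega> * Y l \<omega>) = 0" by (simp add: EYY)
      qed
      then show "b k * b k * expectation (\<lambda>\<omega>. Y k \<omega> * Y k \<omega>) + (\<Sum>l\<in>K - {k}. b k * b l * expectation (\<lambda>\<omega>. Y k \<omega> * Y l \<omega>))
          = b k * b k * expectation (\<lambda>\<omega>. Y k \<omega> * Y k \<omega>)" by simp
    qed
    also have "\<dots> = b k * b k * (p * (1 - p))"
      using EY2[of k] K k by (auto simp: power2_eq_square)
    finally show "(\<Sum>l\<in>K. b k * b l * expectation (\<lambda>\<omega>. Y k \<omega> * Y l \<omega>)) = b k * b k * (p * (1 - p))" .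
  qed
  finally show ?thesis by (simp add: sum_distrib_left power2_eq_square mult_ac)
qed

definition GG :: "nat \<Rightarrow> 'a \<Rightarrow> real" where "GG n \<omega> = gut (\<lambda>i. c i \<omega>) n"

lemma GG_int[simp]: "integrable M (GG n)"
proof -
  have i: "integrable M (\<lambda>\<omega>. CC n - (\<Sum>k\<in>{2..<n}. bb n k * Z k \<omega>))" by simp
  have eq: "\<And>\<omega>. \<omega> \<in> space M \<Longrightarrow> GG n \<omega> = CC n - (\<Sum>k\<in>{2..<n}. bb n k * Z k \<omega>)"
    by (simp add: GG_def G_repr)
  have "integrable M (GG n) \<longleftrightarrow> integrable M (\<lambda>\<omega>. CC n - (\<Sum>k\<in>{2..<n}. bb n k * Z k \<omega>))"
    by (rule Bochner_Integration.integrable_cong) (auto simp: eq)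
  then show ?thesis using i by simp
qed

lemma E_GG: "expectation (GG n) = CC n - (\<Sum>k\<in>{2..<n}. bb n k * p)"
proof -
  have "expectation (GG n) = expectation (\<lambda>\<omega>. CC n - (\<Sum>k\<in>{2..<n}. bb n k * Z k \<omega>))"
    by (rule Bochner_Integration.integral_cong[OF refl]) (simp add: GG_def G_repr)
  also have "\<dots> = CC n - (\<Sum>k\<in>{2..<n}. bb n k * p)"
    by (simp add: prob_space integral_sum EZ)
  finally show ?thesis .
qed

lemma GG_centered: "\<omega> \<in> space M \<Longrightarrow> GG n \<omega> - expectation (GG n) = - (\<Sum>k\<in>{2..<n}. bb n k * Y k \<omega>)"
  by (simp add: GG_def G_repr E_GG Y_def sum_subtractf algebra_simps)

lemma Var_GG: "variance (GG n) = p * (1 - p) * (\<Sum>k\<in>{2..<n}. (bb n k)^2)"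
proof -
  have "variance (GG n) = expectation (\<lambda>\<omega>. (\<Sum>k\<in>{2..<n}. bb n k * Y k \<omega>)^2)"
    by (rule Bochner_Integration.integral_cong[OF refl]) (simp add: GG_centered)
  also have "\<dots> = p * (1 - p) * (\<Sum>k\<in>{2..<n}. (bb n k)^2)"
    by (rule E_sq_sum) auto
  finally show ?thesis .
qed

end

lemma exp_neg_approx:
  fixes x :: real assumes "0 \<le> x"
  shows "\<bar>exp (- x) - (1 - x)\<bar> \<le> x^2"
proof -
  have lo: "1 - x \<le> exp (- x)" using exp_ge_add_one_self[of "-x"] by simp
  have "exp x \<ge> 1 + x" by (rule exp_ge_add_one_self)
  then have "exp (- x) \<le> 1 / (1 + x)" using assms by (simp add: exp_minus field_simps)
  also have "1 / (1 + x) \<le> 1 - x + x^2"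
    using assms by (simp add: field_simps power2_eq_square)
  finally show ?thesis using lo by simp
qed

context pgs begin

definition SS :: "(nat \<Rightarrow> nat \<Rightarrow> real) \<Rightarrow> nat \<Rightarrow> 'a \<Rightarrow> real" where
  "SS a n \<omega> = (\<Sum>k\<in>{2..<n}. a n k * Y k \<omega>)"

lemma SS_meas[measurable]: "SS a n \<in> borel_measurable M"
  unfolding SS_def by measurable

lemma Y_sq_bound: "(Y k x)^2 \<le> 1"
  using Y_bound[of k x] by (simp add: abs_square_le_1)

lemma char_one:
  assumes k: "k \<ge> 2"
  shows "cmod (char (distr M borel (\<lambda>\<omega>. b * Y k \<omega>)) t - complex_of_real (1 - t^2 * (b^2 * (p*(1-p))) / 2))
     \<le> \<bar>t\<bar>^3 * \<bar>b\<bar> * (b^2 * (p*(1-p))) / 6"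
proof -
  let ?X = "\<lambda>\<omega>. b * Y k \<omega>"
  have iX: "integrable M ?X" by simp
  have iX2: "integrable M (\<lambda>\<omega>. (?X \<omega>)^2)"
    by (rule integrable_const_bound[where B="b^2"])
       (auto simp: power_mult_distrib intro!: mult_left_le Y_sq_bound)
  have EX: "expectation ?X = 0" using EY[OF k] by simp
  have EX2: "expectation (\<lambda>\<omega>. (?X \<omega>)^2) = b^2 * (p*(1-p))"
    using EY2[OF k] by (simp add: power_mult_distrib)
  have VX: "variance ?X = b^2 * (p*(1-p))" unfolding EX using EX2 by simp
  have "cmod (char (distr M borel ?X) t - (1 - t^2 * (b^2 * (p*(1-p))) / 2)) \<le>
    (t^2 / 6) * expectation (\<lambda>x. min (6 * (?X x)^2) (\<bar>t\<bar> * \<bar>?X x\<bar>^3))"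
    by (rule char_approx3'[OF _ iX iX2 EX VX refl]) simp
  also have "\<dots> \<le> (t^2 / 6) * expectation (\<lambda>x. \<bar>t\<bar> * \<bar>b\<bar> * (?X x)^2)"
  proof (intro mult_left_mono integral_mono)
    show "integrable M (\<lambda>x. min (6 * (?X x)^2) (\<bar>t\<bar> * \<bar>?X x\<bar>^3))"
    proof (rule integrable_const_bound[where B="6 * b^2"])
      show "AE x in M. norm (min (6 * (?X x)^2) (\<bar>t\<bar> * \<bar>?X x\<bar>^3)) \<le> 6 * b^2"
      proof (rule AE_I2)
        fix x
        have a: "0 \<le> min (6 * (?X x)^2) (\<bar>t\<bar> * \<bar>?X x\<bar>^3)" by simp
        have "min (6 * (?X x)^2) (\<bar>t\<bar> * \<bar>?X x\<bar>^3) \<le> 6 * (?X x)^2" by (rule min.cobounded1)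
        also have "\<dots> \<le> 6 * b^2" using Y_sq_bound[of k x] by (simp add: power_mult_distrib mult_left_le)
        finally show "norm (min (6 * (?X x)^2) (\<bar>t\<bar> * \<bar>?X x\<bar>^3)) \<le> 6 * b^2" using a by simp
      qed
    qed simp
    show "integrable M (\<lambda>x. \<bar>t\<bar> * \<bar>b\<bar> * (?X x)^2)" using iX2 by simp
    fix x assume "x \<in> space M"
    have cube: "\<bar>z\<bar>^3 = \<bar>z\<bar> * z^2" for z :: real
      by (cases "z \<ge> 0") (auto simp: power3_eq_cube power2_eq_square)
    have "\<bar>?X x\<bar>^3 = \<bar>b\<bar> * \<bar>Y k x\<bar> * (?X x)^2" unfolding cube by (simp add: abs_mult)
    also have "\<dots> \<le> \<bar>b\<bar> * (?X x)^2"
      using Y_bound[of k x] by (intro mult_right_mono) (auto intro: mult_left_le)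
    finally have "\<bar>?X x\<bar>^3 \<le> \<bar>b\<bar> * (?X x)^2" .
    from mult_left_mono[OF this, of "\<bar>t\<bar>"] have "\<bar>t\<bar> * \<bar>?X x\<bar>^3 \<le> \<bar>t\<bar> * \<bar>b\<bar> * (?X x)^2" by (simp add: mult.assoc)
    then show "min (6 * (?X x)^2) (\<bar>t\<bar> * \<bar>?X x\<bar>^3) \<le> \<bar>t\<bar> * \<bar>b\<bar> * (?X x)^2" by simp
  qed simp
  also have "\<dots> = (t^2 / 6) * (\<bar>t\<bar> * \<bar>b\<bar> * (b^2 * (p*(1-p))))" using EX2 by simp
  also have "\<dots> = \<bar>t\<bar>^3 * \<bar>b\<bar> * (b^2 * (p*(1-p))) / 6"
  proof -
    have "t^2 = \<bar>t\<bar>^2" by simp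
    then show ?thesis by (simp add: power2_eq_square power3_eq_cube mult_ac)
  qed
  finally show ?thesis by simp
qed

lemma char_SS: "char (distr M borel (SS a n)) t = (\<Prod>k\<in>{2..<n}. char (distr M borel (\<lambda>\<omega>. a n k * Y k \<omega>)) t)"
proof -
  have "indep_vars (\<lambda>_. borel) (\<lambda>k \<omega>. (\<lambda>y. a n k * y) (Y k \<omega>)) {2..<n}"
    by (rule indep_vars_compose2[OF indep_vars_subset[OF indep_Y]]) auto
  then have "char (distr M borel (\<lambda>\<omega>. \<Sum>k\<in>{2..<n}. a n k * Y k \<omega>)) t = (\<Prod>k\<in>{2..<n}. char (distr M borel (\<lambda>\<omega>. a n k * Y k \<omega>)) t)"
    by (rule char_distr_sum)
  then show ?thesis unfolding SS_def[abs_def] .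
qed

end

context pgs begin

lemma char_bound:
  fixes a :: "nat \<Rightarrow> nat \<Rightarrow> real" and d :: real
  assumes sumsq: "p*(1-p) * (\<Sum>k\<in>{2..<n}. (a n k)^2) = 1"
    and bnd: "\<And>k. k \<in> {2..<n} \<Longrightarrow> \<bar>a n k\<bar> \<le> d"
    and small: "d * (\<bar>t\<bar> + 1) \<le> 1"
  shows "cmod (char (distr M borel (SS a n)) t - complex_of_real (exp (-(t^2)/2))) \<le> \<bar>t\<bar>^3 * d / 6 + t^4 * d^2 / 4"
proof -
  let ?K = "{2..<n}"
  define q where "q = p * (1 - p)"
  have q0: "0 < q" and q1: "q \<le> 1" using p0 p1 by (auto simp: q_def intro: mult_le_one)
  define x where "x k = t^2 * (a n k)^2 * q / 2" for k
  define ch where "ch k = char (distr M borel (\<lambda>\<omega>. a n k * Y k \<omega>)) t" for k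
  have d0: "0 \<le> d"
  proof -
    have "?K \<noteq> {}" proof assume "?K = {}" then show False using sumsq by simp qed
    then obtain k where k: "k \<in> ?K" by blast
    show ?thesis using abs_ge_zero[of "a n k"] bnd[OF k] by linarith
  qed
  have td: "\<bar>t\<bar> * d \<le> 1" using small d0 by (simp add: algebra_simps)
  have tdsq: "t^2 * d^2 \<le> 1"
  proof -
    have "t^2 * d^2 = (\<bar>t\<bar> * d)^2" by (simp add: power_mult_distrib)
    also have "\<dots> \<le> 1" using td d0 by (simp add: abs_square_le_1 abs_mult)
    finally show ?thesis .
  qed
  have a2: "(a n k)^2 \<le> d^2" if "k \<in> ?K" for k
    using bnd[OF that] by (simp add: abs_le_square_iff[symmetric] abs_of_nonneg[OF d0])
  have x0: "0 \<le> x k" for k using q0 by (simp add: x_def)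
  have xle: "x k \<le> t^2 * d^2 / 2" if "k \<in> ?K" for k
  proof -
    have "t^2 * (a n k)^2 * q \<le> t^2 * d^2 * 1"
      by (intro mult_mono mult_left_mono a2 that q1) (use q0 in auto)
    then show ?thesis by (simp add: x_def)
  qed
  have x1: "x k \<le> 1" if "k \<in> ?K" for k using xle[OF that] tdsq by simp
  have xsum: "(\<Sum>k\<in>?K. x k) = t^2 / 2"
  proof -
    have "(\<Sum>k\<in>?K. x k) = t^2 / 2 * (q * (\<Sum>k\<in>?K. (a n k)^2))"
      by (simp add: x_def sum_distrib_left sum_divide_distrib mult_ac)
    then show ?thesis using sumsq by (simp add: q_def)
  qed
  have n1x: "norm (complex_of_real (1 - x k)) \<le> 1" if "k \<in> ?K" for k
    unfolding norm_of_real using x0[of k] x1[OF that] by auto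
  have n1e: "norm (complex_of_real (exp (- x k))) \<le> 1" for k
    unfolding norm_of_real using x0[of k] by auto
  have chn: "norm (ch k) \<le> 1" for k
    unfolding ch_def by (rule real_distribution.cmod_char_le_1) simp
  have "char (distr M borel (SS a n)) t = (\<Prod>k\<in>?K. ch k)" unfolding char_SS ch_def ..
  moreover have "complex_of_real (exp (-(t^2)/2)) = (\<Prod>k\<in>?K. complex_of_real (exp (- x k)))"
  proof -
    have "exp (-(t^2)/2) = exp (\<Sum>k\<in>?K. - x k)" using xsum by (simp add: sum_negf)
    also have "\<dots> = (\<Prod>k\<in>?K. exp (- x k))" by (rule exp_sum) simp
    finally show ?thesis by simp
  qed
  ultimately have "cmod (char (distr M borel (SS a n)) t - complex_of_real (exp (-(t^2)/2)))
      = cmod ((\<Prod>k\<in>?K. ch k) - (\<Prod>k\<in>?K. complex_of_real (1 - x k))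
           + ((\<Prod>k\<in>?K. complex_of_real (1 - x k)) - (\<Prod>k\<in>?K. complex_of_real (exp (- x k)))))"
    by simp
  also have "\<dots> \<le> cmod ((\<Prod>k\<in>?K. ch k) - (\<Prod>k\<in>?K. complex_of_real (1 - x k)))
         + cmod ((\<Prod>k\<in>?K. complex_of_real (1 - x k)) - (\<Prod>k\<in>?K. complex_of_real (exp (- x k))))"
    by (rule norm_triangle_ineq)
  also have "\<dots> \<le> \<bar>t\<bar>^3 * d / 6 + t^4 * d^2 / 4"
  proof (rule add_mono)
    have "cmod ((\<Prod>k\<in>?K. ch k) - (\<Prod>k\<in>?K. complex_of_real (1 - x k))) \<le> (\<Sum>k\<in>?K. cmod (ch k - complex_of_real (1 - x k)))"
      by (rule norm_prod_diff) (simp_all only: chn n1x)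
    also have "\<dots> \<le> (\<Sum>k\<in>?K. \<bar>t\<bar>^3 * d * ((a n k)^2 * q) / 6)"
    proof (rule sum_mono)
      fix k assume k: "k \<in> ?K"
      have "cmod (ch k - complex_of_real (1 - x k)) \<le> \<bar>t\<bar>^3 * \<bar>a n k\<bar> * ((a n k)^2 * q) / 6"
        using char_one[of k "a n k" t] k by (simp add: ch_def x_def q_def mult_ac)
      also have "\<dots> \<le> \<bar>t\<bar>^3 * d * ((a n k)^2 * q) / 6"
        using bnd[OF k] q0 by (intro divide_right_mono mult_right_mono mult_left_mono) auto
      finally show "cmod (ch k - complex_of_real (1 - x k)) \<le> \<bar>t\<bar>^3 * d * ((a n k)^2 * q) / 6" .
    qed
    also have "\<dots> = \<bar>t\<bar>^3 * d / 6 * (q * (\<Sum>k\<in>?K. (a n k)^2))"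
      by (simp add: sum_distrib_left sum_divide_distrib mult_ac)
    also have "\<dots> = \<bar>t\<bar>^3 * d / 6" using sumsq by (simp add: q_def)
    finally show "cmod ((\<Prod>k\<in>?K. ch k) - (\<Prod>k\<in>?K. complex_of_real (1 - x k))) \<le> \<bar>t\<bar>^3 * d / 6" .
  next
    have "cmod ((\<Prod>k\<in>?K. complex_of_real (1 - x k)) - (\<Prod>k\<in>?K. complex_of_real (exp (- x k))))
        \<le> (\<Sum>k\<in>?K. cmod (complex_of_real (1 - x k) - complex_of_real (exp (- x k))))"
      by (rule norm_prod_diff) (simp_all only: n1e n1x)
    also have "\<dots> \<le> (\<Sum>k\<in>?K. x k * (t^2 * d^2 / 2))"
    proof (rule sum_mono)
      fix k assume k: "k \<in> ?K"
      have "cmod (complex_of_real (1 - x k) - complex_of_real (exp (- x k))) = \<bar>exp (- x k) - (1 - x k)\<bar>"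
        by (simp del: of_real_diff add: of_real_diff[symmetric] abs_minus_commute)
      also have "\<dots> \<le> (x k)^2" by (rule exp_neg_approx[OF x0])
      also have "\<dots> = x k * x k" by (rule power2_eq_square)
      also have "\<dots> \<le> x k * (t^2 * d^2 / 2)"
        by (rule mult_left_mono[OF xle[OF k] x0])
      finally show "cmod (complex_of_real (1 - x k) - complex_of_real (exp (- x k))) \<le> x k * (t^2 * d^2 / 2)" .
    qed
    also have "\<dots> = t^4 * d^2 / 4"
      unfolding sum_distrib_right[symmetric] xsum by (simp add: power2_eq_square power4_eq_xxxx)
    finally show "cmod ((\<Prod>k\<in>?K. complex_of_real (1 - x k)) - (\<Prod>k\<in>?K. complex_of_real (exp (- x k)))) \<le> t^4 * d^2 / 4" .
  qed
  finally show ?thesis .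
qed

lemma char_conv:
  fixes a :: "nat \<Rightarrow> nat \<Rightarrow> real" and \<delta> :: "nat \<Rightarrow> real"
  assumes sumsq: "eventually (\<lambda>n. p*(1-p) * (\<Sum>k\<in>{2..<n}. (a n k)^2) = 1) sequentially"
    and bnd: "\<And>n k. k \<in> {2..<n} \<Longrightarrow> \<bar>a n k\<bar> \<le> \<delta> n"
    and d0: "\<delta> \<longlonglongrightarrow> 0"
  shows "(\<lambda>n. char (distr M borel (SS a n)) t) \<longlonglongrightarrow> complex_of_real (exp (-(t^2)/2))"
proof -
  have e: "0 < 1 / (\<bar>t\<bar> + 1)" by (simp add: add_pos_nonneg)
  have "eventually (\<lambda>n. dist (\<delta> n) 0 < 1 / (\<bar>t\<bar> + 1)) sequentially"
    using d0 e unfolding tendsto_iff by blast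
  then have ev: "eventually (\<lambda>n. \<bar>\<delta> n\<bar> < 1 / (\<bar>t\<bar> + 1)) sequentially"
    by (simp add: dist_real_def)
  have ev2: "eventually (\<lambda>n. norm (char (distr M borel (SS a n)) t - complex_of_real (exp (-(t^2)/2)))
         \<le> \<bar>t\<bar>^3 * \<bar>\<delta> n\<bar> / 6 + t^4 * \<bar>\<delta> n\<bar>^2 / 4) sequentially"
    using ev sumsq
  proof eventually_elim
    case (elim n)
    have pos: "0 < \<bar>t\<bar> + 1" by (simp add: add_pos_nonneg)
    have sm: "\<bar>\<delta> n\<bar> * (\<bar>t\<bar> + 1) \<le> 1"
      using elim(1) pos by (simp add: less_divide_eq)
    have bd: "\<bar>a n k\<bar> \<le> \<bar>\<delta> n\<bar>" if "k \<in> {2..<n}" for k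
      using bnd[OF that] abs_ge_self[of "\<delta> n"] by linarith
    show ?case by (rule char_bound[where a=a and n=n and d="\<bar>\<delta> n\<bar>" and t=t, OF elim(2) bd sm])
  qed
  have h1: "(\<lambda>n. \<bar>\<delta> n\<bar>) \<longlonglongrightarrow> 0" by (rule tendsto_rabs_zero[OF d0])
  have h2: "(\<lambda>n. \<bar>t\<bar>^3 * \<bar>\<delta> n\<bar> / 6) \<longlonglongrightarrow> \<bar>t\<bar>^3 * 0 / 6"
    by (intro tendsto_divide tendsto_mult tendsto_const h1) simp
  have h3: "(\<lambda>n. t^4 * \<bar>\<delta> n\<bar>^2 / 4) \<longlonglongrightarrow> t^4 * 0^2 / 4"
    by (intro tendsto_divide tendsto_mult tendsto_const tendsto_power h1) simp
  have "(\<lambda>n. \<bar>t\<bar>^3 * \<bar>\<delta> n\<bar> / 6 + t^4 * \<bar>\<delta> n\<bar>^2 / 4) \<longlonglongrightarrow> \<bar>t\<bar>^3 * 0 / 6 + t^4 * 0^2 / 4"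
    by (rule tendsto_add[OF h2 h3])
  then have h4: "(\<lambda>n. \<bar>t\<bar>^3 * \<bar>\<delta> n\<bar> / 6 + t^4 * \<bar>\<delta> n\<bar>^2 / 4) \<longlonglongrightarrow> 0" by simp
  have "(\<lambda>n. char (distr M borel (SS a n)) t - complex_of_real (exp (-(t^2)/2))) \<longlonglongrightarrow> 0"
    by (rule Lim_null_comparison[OF ev2 h4])
  then show ?thesis by (rule LIM_zero_cancel)
qed

end

lemma polya_pts:
  fixes \<Phi> :: "real \<Rightarrow> real" and m :: int
  assumes mono: "\<And>x y. x \<le> y \<Longrightarrow> \<Phi> x \<le> \<Phi> y"
    and cont: "\<And>x. isCont \<Phi> x"
    and bot: "(\<Phi> \<longlongrightarrow> 0) at_bot" and top: "(\<Phi> \<longlongrightarrow> 1) at_top"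
    and m: "m \<ge> 1"
  shows "\<exists>xs. \<forall>i\<in>{1..m-1}. \<Phi> (xs i) = real_of_int i / real_of_int m"
proof -
  have "\<exists>x. \<Phi> x = real_of_int i / real_of_int m" if i: "i \<in> {1..m-1}" for i
  proof -
    let ?y = "real_of_int i / real_of_int m"
    have y0: "0 < ?y" and y1: "?y < 1" using i m by (auto simp: divide_less_eq)
    have "eventually (\<lambda>x. \<Phi> x < ?y) at_bot" using order_tendstoD(2)[OF bot y0] .
    then obtain x0 where x0: "\<Phi> x0 < ?y" by (meson eventually_at_bot_linorder order_refl)
    have "eventually (\<lambda>x. \<Phi> x > ?y) at_top" using order_tendstoD(1)[OF top y1] .
    then obtain x1 where x1: "\<Phi> x1 > ?y" by (meson eventually_at_top_linorder order_refl)
    have "x0 \<le> x1" using x0 x1 mono[of x1 x0] by force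
    moreover have "continuous_on {x0..x1} \<Phi>" using cont by (simp add: continuous_at_imp_continuous_on)
    ultimately show ?thesis using IVT'[of \<Phi> x0 ?y x1] x0 x1 by force
  qed
  then show ?thesis by metis
qed

lemma polya:
  fixes F :: "nat \<Rightarrow> real \<Rightarrow> real" and \<Phi> :: "real \<Rightarrow> real"
  assumes Fmono: "\<And>n x y. x \<le> y \<Longrightarrow> F n x \<le> F n y"
    and F0: "\<And>n x. 0 \<le> F n x" and F1: "\<And>n x. F n x \<le> 1"
    and mono: "\<And>x y. x \<le> y \<Longrightarrow> \<Phi> x \<le> \<Phi> y"
    and cont: "\<And>x. isCont \<Phi> x"
    and bot: "(\<Phi> \<longlongrightarrow> 0) at_bot" and top: "(\<Phi> \<longlongrightarrow> 1) at_top"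
    and conv: "\<And>x. (\<lambda>n. F n x) \<longlonglongrightarrow> \<Phi> x"
  shows "(\<lambda>n. SUP a. \<bar>F n a - \<Phi> a\<bar>) \<longlonglongrightarrow> 0"
proof -
  have P0: "0 \<le> \<Phi> x" for x using conv[of x] F0 by (meson LIMSEQ_le_const)
  have P1: "\<Phi> x \<le> 1" for x using conv[of x] F1 by (meson LIMSEQ_le_const2)
  have bdd: "bdd_above (range (\<lambda>a. \<bar>F n a - \<Phi> a\<bar>))" for n
  proof (rule bdd_aboveI2)
    fix a show "\<bar>F n a - \<Phi> a\<bar> \<le> 1" using F0[of n a] F1[of n a] P0[of a] P1[of a] by linarith
  qed
  show ?thesis unfolding tendsto_iff
  proof (intro allI impI)
    fix e :: real assume e: "0 < e"
    define m where "m = \<lceil>4 / e\<rceil> + 1"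
    have "- 1 < 4 / e" using divide_pos_pos[of 4 e] e by linarith
    then have m1: "m \<ge> 1" by (simp add: m_def)
    have mpos: "(0::real) < real_of_int m" using m1 by simp
    have me: "1 / real_of_int m \<le> e / 4"
    proof -
      have "4 / e \<le> real_of_int m" unfolding m_def by linarith
      then show ?thesis using e mpos by (simp add: field_simps)
    qed
    obtain xs where xs: "\<And>i. i \<in> {1..m-1} \<Longrightarrow> \<Phi> (xs i) = real_of_int i / real_of_int m"
      using polya_pts[OF mono cont bot top m1] by blast
    have "eventually (\<lambda>n. \<forall>i\<in>{1..m-1}. \<bar>F n (xs i) - \<Phi> (xs i)\<bar> < e / 4) sequentially"
    proof (rule eventually_ball_finite)
      show "finite {1..m-1}" by simp
      show "\<forall>i\<in>{1..m-1}. eventually (\<lambda>n. \<bar>F n (xs i) - \<Phi> (xs i)\<bar> < e / 4) sequentially"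
      proof
        fix i
        have "0 < e / 4" using e by simp
        have "eventually (\<lambda>n. dist (F n (xs i)) (\<Phi> (xs i)) < e / 4) sequentially"
          using conv[of "xs i"] \<open>0 < e / 4\<close> unfolding tendsto_iff by blast
        then show "eventually (\<lambda>n. \<bar>F n (xs i) - \<Phi> (xs i)\<bar> < e / 4) sequentially"
          by (simp add: dist_real_def)
      qed
    qed
    then show "eventually (\<lambda>n. dist (SUP a. \<bar>F n a - \<Phi> a\<bar>) 0 < e) sequentially"
    proof eventually_elim
      case (elim n)
      have pt: "\<bar>F n a - \<Phi> a\<bar> \<le> e / 2" for a
      proof -
        let ?y = "real_of_int m * \<Phi> a"
        have up: "F n a \<le> \<Phi> a + e / 2"
        proof -
          define j where "j = \<lfloor>?y\<rfloor> + 1"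
          have j1: "?y < real_of_int j" "real_of_int j \<le> ?y + 1" unfolding j_def by linarith+
          show ?thesis
          proof (cases "j \<le> m - 1")
            case True
            have "0 \<le> ?y" using P0[of a] mpos by simp
            then have "0 \<le> \<lfloor>?y\<rfloor>" by simp
            then have jpos: "j \<ge> 1" unfolding j_def by simp
            then have ji: "j \<in> {1..m-1}" using True by simp
            have "\<Phi> (xs j) = real_of_int j / real_of_int m" using xs[OF ji] .
            moreover have "\<Phi> a < real_of_int j / real_of_int m" using j1 mpos by (simp add: field_simps)
            ultimately have "a < xs j" using mono[of "xs j" a] by force
            then have "F n a \<le> F n (xs j)" using Fmono by simp
            also have "\<dots> < \<Phi> (xs j) + e / 4"
            proof -
              have "\<bar>F n (xs j) - \<Phi> (xs j)\<bar> < e / 4" using elim ji by blast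
              then show ?thesis by linarith
            qed
            also have "\<dots> = real_of_int j / real_of_int m + e / 4" using xs[OF ji] by simp
            also have "\<dots> \<le> \<Phi> a + 1 / real_of_int m + e / 4"
            proof -
              have "real_of_int j / real_of_int m \<le> (?y + 1) / real_of_int m"
                using j1(2) mpos by (intro divide_right_mono) auto
              also have "\<dots> = \<Phi> a + 1 / real_of_int m" using mpos by (simp add: field_simps)
              finally show ?thesis by simp
            qed
            finally show ?thesis using me e by linarith
          next
            case False
            then have "real_of_int m - 1 \<le> ?y" using j1 unfolding j_def by linarith
            then have "1 - 1 / real_of_int m \<le> \<Phi> a" using mpos by (simp add: field_simps)
            then show ?thesis using F1[of n a] me e by linarith
          qed
        qed
        have lo: "\<Phi> a - e / 2 \<le> F n a"
        proof -
          define j where "j = \<lceil>?y\<rceil> - 1"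
          have j1: "real_of_int j < ?y" "?y \<le> real_of_int j + 1" unfolding j_def by linarith+
          show ?thesis
          proof (cases "j \<ge> 1")
            case True
            have "?y \<le> real_of_int m" using P1[of a] mpos by simp
            then have "j \<le> m - 1" using j1 by linarith
            then have ji: "j \<in> {1..m-1}" using True by simp
            have "real_of_int j / real_of_int m < \<Phi> a" using j1 mpos by (simp add: field_simps)
            then have "xs j < a" using xs[OF ji] mono[of a "xs j"] by force
            have "\<Phi> a - e / 2 \<le> real_of_int j / real_of_int m + 1 / real_of_int m - e / 2"
            proof -
              have "\<Phi> a = ?y / real_of_int m" using mpos by simp
              also have "\<dots> \<le> (real_of_int j + 1) / real_of_int m"
                using j1(2) mpos by (intro divide_right_mono) auto
              also have "\<dots> = real_of_int j / real_of_int m + 1 / real_of_int m" by (simp add: add_divide_distrib)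
              finally show ?thesis by simp
            qed
            also have "\<dots> \<le> \<Phi> (xs j) - e / 4" using xs[OF ji] me e by linarith
            also have "\<dots> < F n (xs j)"
            proof -
              have "\<bar>F n (xs j) - \<Phi> (xs j)\<bar> < e / 4" using elim ji by blast
              then show ?thesis by linarith
            qed
            also have "\<dots> \<le> F n a" using Fmono \<open>xs j < a\<close> by simp
            finally show ?thesis by simp
          next
            case False
            then have "?y \<le> 1" using j1 by linarith
            then have "\<Phi> a \<le> 1 / real_of_int m" using mpos by (simp add: field_simps)
            then show ?thesis using F0[of n a] me e by linarith
          qed
        qed
        show ?thesis using up lo by linarith
      qed
      have "(SUP a. \<bar>F n a - \<Phi> a\<bar>) \<le> e / 2" by (rule cSUP_least) (simp, rule pt)
      moreover have "0 \<le> (SUP a. \<bar>F n a - \<Phi> a\<bar>)"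
        using cSUP_upper[OF UNIV_I bdd[of n], of 0] by (meson abs_ge_zero order_trans)
      ultimately show ?case using e by (simp add: dist_real_def)
    qed
  qed
qed

lemma cdf_std_normal:
  "cdf std_normal_distribution a = (LBINT t:{..a}. (exp (- (t^2) / 2) / sqrt (2 * pi)))"
proof -
  have "cdf std_normal_distribution a = measure std_normal_distribution {..a}" by (simp add: cdf_def)
  also have "\<dots> = integral\<^sup>L std_normal_distribution (indicator {..a})"
    by simp
  also have "\<dots> = integral\<^sup>L lborel (\<lambda>x. std_normal_density x *\<^sub>R indicator {..a} x)"
    by (rule integral_density) auto
  also have "\<dots> = (LBINT t:{..a}. (exp (- (t^2) / 2) / sqrt (2 * pi)))"
    unfolding set_lebesgue_integral_def
    by (rule Bochner_Integration.integral_cong[OF refl]) (simp add: std_normal_density_def mult_ac)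
  finally show ?thesis .
qed

lemma rd_cdf_facts:
  assumes "real_distribution N"
  shows "x \<le> y \<Longrightarrow> cdf N x \<le> cdf N y" "0 \<le> cdf N x" "cdf N x \<le> 1"
    "(cdf N \<longlongrightarrow> 0) at_bot" "(cdf N \<longlongrightarrow> 1) at_top"
proof -
  interpret real_distribution N by fact
  show "x \<le> y \<Longrightarrow> cdf N x \<le> cdf N y" by (rule cdf_nondecreasing)
  show "0 \<le> cdf N x" by (rule cdf_nonneg)
  show "cdf N x \<le> 1" by (rule cdf_bounded_prob)
  show "(cdf N \<longlongrightarrow> 0) at_bot" by (rule cdf_lim_at_bot)
  show "(cdf N \<longlongrightarrow> 1) at_top" by (rule cdf_lim_at_top_prob)
qed

lemma isCont_cdf_std_normal: "isCont (cdf std_normal_distribution) x"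
proof -
  interpret real_distribution std_normal_distribution by (rule real_dist_normal_dist)
  have "emeasure std_normal_distribution {x} = (\<integral>\<^sup>+ y. ennreal (std_normal_density y) * indicator {x} y \<partial>lborel)"
    by (rule emeasure_density) auto
  also have "\<dots> = 0" by (rule nn_integral_null_set) (auto simp: null_sets_def)
  finally have "measure std_normal_distribution {x} = 0" by (simp add: measure_def)
  then show ?thesis by (simp add: isCont_cdf)
qed

lemma poly_asymp: "(\<lambda>n. real n^2 / sqrt (real n^5 - 5*real n^4 + 10*real n^3 - 10*real n^2 + 4*real n)) \<longlonglongrightarrow> 0"
  by real_asymp

context pgs begin

definition sig :: "nat \<Rightarrow> real" where "sig n = sqrt (variance (GG n))"
definition co :: "nat \<Rightarrow> nat \<Rightarrow> real" where "co n k = - bb n k / sig n"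

lemma q_pos: "0 < p * (1 - p)" using p0 p1 by simp

lemma Var_GG2: "n \<ge> 1 \<Longrightarrow> variance (GG n) = p * (1 - p) * (144^2 * (real n^5 - 5*real n^4 + 10*real n^3 - 10*real n^2 + 4*real n) / 30)"
  using Var_GG bb_sq_sum by simp

lemma main_var:
  assumes "n \<ge> 1"
  shows "variance (\<lambda>\<omega>. gut (\<lambda>i. c i \<omega>) n) =
            (let s1 = 288^2 * p + 432^2 * (1 - p) - (288 * p + 432 * (1 - p))^2;
                 s1t = 156^2 * p + 300^2 * (1 - p) - (156 * p + 300 * (1 - p))^2;
                 r1 = 288 * 156 * p + 432 * 300 * (1 - p)
                      - (288 * p + 432 * (1 - p)) * (156 * p + 300 * (1 - p));
                 x = real n
             in (s1 * x^5 - 5 * r1 * x^4 + 10 * s1t * x^3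
                 + (65 * r1 - 30 * s1 - 45 * s1t) * x^2
                 + (59 * s1 + 65 * s1t - 120 * r1) * x
                 + (60 * r1 - 30 * s1 - 30 * s1t)) / 30)"
proof -
  have g: "variance (\<lambda>\<omega>. gut (\<lambda>i. c i \<omega>) n) = variance (GG n)" by (simp only: GG_def[abs_def])
  have s1: "288^2 * p + 432^2 * (1 - p) - (288 * p + 432 * (1 - p))^2 = 144^2 * (p * (1 - p))"
    by (simp add: power2_eq_square algebra_simps)
  have s1t: "156^2 * p + 300^2 * (1 - p) - (156 * p + 300 * (1 - p))^2 = 144^2 * (p * (1 - p))"
    by (simp add: power2_eq_square algebra_simps)
  have r1: "288 * 156 * p + 432 * 300 * (1 - p) - (288 * p + 432 * (1 - p)) * (156 * p + 300 * (1 - p)) = 144^2 * (p * (1 - p))"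
    by (simp add: power2_eq_square algebra_simps)
  show ?thesis unfolding g Var_GG2[OF assms] Let_def s1 s1t r1
    by (simp add: algebra_simps)
qed

lemma Var_nonneg: "0 \<le> variance (GG n)"
  using Var_GG q_pos by (simp add: sum_nonneg)

lemma sumsq_co: "n \<ge> 3 \<Longrightarrow> p * (1 - p) * (\<Sum>k\<in>{2..<n}. (co n k)^2) = 1"
proof -
  assume n: "n \<ge> 3"
  have "(bb n 2)^2 \<le> (\<Sum>k\<in>{2..<n}. (bb n k)^2)"
    by (rule member_le_sum) (use n in auto)
  moreover have "0 < (bb n 2)^2" using n by (simp add: bb_def)
  ultimately have pos: "0 < (\<Sum>k\<in>{2..<n}. (bb n k)^2)" by linarith
  have V: "variance (GG n) = p * (1 - p) * (\<Sum>k\<in>{2..<n}. (bb n k)^2)" by (rule Var_GG)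
  have Vp: "0 < variance (GG n)" unfolding V using pos q_pos by simp
  have sig2: "(sig n)^2 = variance (GG n)" unfolding sig_def using Var_nonneg by simp
  have "(\<Sum>k\<in>{2..<n}. (co n k)^2) = (\<Sum>k\<in>{2..<n}. (bb n k)^2) / (sig n)^2"
    by (simp add: co_def power_divide sum_divide_distrib)
  also have "\<dots> = 1 / (p * (1 - p))" unfolding sig2 V using pos by simp
  finally show ?thesis using p0 p1 by simp
qed

definition dlt :: "nat \<Rightarrow> real" where "dlt n = 144 * real n ^ 2 / sig n"

lemma bnd_co: "k \<in> {2..<n} \<Longrightarrow> \<bar>co n k\<bar> \<le> dlt n"
proof -
  assume k: "k \<in> {2..<n}"
  have s0: "0 \<le> sig n" by (simp add: sig_def)
  have "\<bar>bb n k\<bar> = 144 * ((real k - 1) * (real n - real k))" using k by (simp add: bb_def abs_mult)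
  also have "\<dots> \<le> 144 * (real n * real n)"
    using k by (intro mult_left_mono mult_mono) auto
  finally have "\<bar>bb n k\<bar> \<le> 144 * real n ^ 2" by (simp add: power2_eq_square)
  then show ?thesis unfolding co_def dlt_def using s0 by (simp add: divide_right_mono)
qed

lemma dlt_lim: "dlt \<longlonglongrightarrow> 0"
proof -
  define q where "q = p * (1 - p)"
  have qp: "0 < q" using q_pos by (simp add: q_def)
  define P where "P n = real n^5 - 5*real n^4 + 10*real n^3 - 10*real n^2 + 4*real n" for n :: nat
  have eq: "dlt n = (1 / sqrt (q / 30)) * (real n^2 / sqrt (P n))" if "n \<ge> 1" for n
  proof -
    have "sig n = sqrt (q * (144^2 * P n / 30))" unfolding sig_def Var_GG2[OF that] q_def P_def ..
    also have "\<dots> = 144 * sqrt (q / 30) * sqrt (P n)"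
    proof -
      have "q * (144^2 * P n / 30) = 144^2 * ((q / 30) * P n)" by simp
      then have "sqrt (q * (144^2 * P n / 30)) = sqrt (144^2) * (sqrt (q / 30) * sqrt (P n))"
        by (simp only: real_sqrt_mult)
      then show ?thesis by simp
    qed
    finally show ?thesis unfolding dlt_def by simp
  qed
  have "(\<lambda>n. (1 / sqrt (q / 30)) * (real n^2 / sqrt (P n))) \<longlonglongrightarrow> (1 / sqrt (q / 30)) * 0"
    by (rule tendsto_mult[OF tendsto_const]) (use poly_asymp in \<open>simp add: P_def\<close>)
  then have "(\<lambda>n. (1 / sqrt (q / 30)) * (real n^2 / sqrt (P n))) \<longlonglongrightarrow> 0" by simp
  moreover have "eventually (\<lambda>n. (1 / sqrt (q / 30)) * (real n^2 / sqrt (P n)) = dlt n) sequentially"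
    using eventually_ge_at_top[of 1] by eventually_elim (simp add: eq)
  ultimately show ?thesis by (rule Lim_transform_eventually)
qed

lemma sumsq_ev: "eventually (\<lambda>n. p * (1 - p) * (\<Sum>k\<in>{2..<n}. (co n k)^2) = 1) sequentially"
  using eventually_ge_at_top[of 3] by eventually_elim (rule sumsq_co)

lemma weak_conv_SS: "weak_conv_m (\<lambda>n. distr M borel (SS co n)) std_normal_distribution"
proof (rule levy_continuity)
  fix t
  show "(\<lambda>n. char (distr M borel (SS co n)) t) \<longlonglongrightarrow> char std_normal_distribution t"
    unfolding char_std_normal_distribution using char_conv[OF sumsq_ev bnd_co dlt_lim] by simp
qed (simp_all add: real_dist_normal_dist)

lemma cdf_conv: "(\<lambda>n. cdf (distr M borel (SS co n)) x) \<longlonglongrightarrow> cdf std_normal_distribution x"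
  using weak_conv_SS isCont_cdf_std_normal unfolding weak_conv_m_def weak_conv_def by blast

lemma std_repr:
  assumes "\<omega> \<in> space M"
  shows "(gut (\<lambda>i. c i \<omega>) n - expectation (\<lambda>\<omega>'. gut (\<lambda>i. c i \<omega>') n))
          / sqrt (variance (\<lambda>\<omega>'. gut (\<lambda>i. c i \<omega>') n)) = SS co n \<omega>"
proof -
  have v: "variance (\<lambda>\<omega>'. gut (\<lambda>i. c i \<omega>') n) = variance (GG n)" by (simp only: GG_def[abs_def])
  have e: "expectation (\<lambda>\<omega>'. gut (\<lambda>i. c i \<omega>') n) = expectation (GG n)" by (simp only: GG_def[abs_def])
  have "gut (\<lambda>i. c i \<omega>) n = GG n \<omega>" by (simp add: GG_def)
  then have "(gut (\<lambda>i. c i \<omega>) n - expectation (\<lambda>\<omega>'. gut (\<lambda>i. c i \<omega>') n))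
          / sqrt (variance (\<lambda>\<omega>'. gut (\<lambda>i. c i \<omega>') n)) = (GG n \<omega> - expectation (GG n)) / sig n"
    unfolding v unfolding e sig_def by simp
  also have "\<dots> = - (\<Sum>k\<in>{2..<n}. bb n k * Y k \<omega>) / sig n" using GG_centered[OF assms] by simp
  also have "\<dots> = SS co n \<omega>"
    by (simp add: SS_def co_def sum_divide_distrib sum_negf[symmetric])
  finally show ?thesis .
qed

lemma meas_eq:
  "measure M {\<omega> \<in> space M. (gut (\<lambda>i. c i \<omega>) n - expectation (\<lambda>\<omega>'. gut (\<lambda>i. c i \<omega>') n))
          / sqrt (variance (\<lambda>\<omega>'. gut (\<lambda>i. c i \<omega>') n)) \<le> a} = cdf (distr M borel (SS co n)) a"
proof -
  have "{\<omega> \<in> space M. (gut (\<lambda>i. c i \<omega>) n - expectation (\<lambda>\<omega>'. gut (\<lambda>i. c i \<omega>') n))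
          / sqrt (variance (\<lambda>\<omega>'. gut (\<lambda>i. c i \<omega>') n)) \<le> a} = SS co n -` {..a} \<inter> space M"
    using std_repr by auto
  moreover have "cdf (distr M borel (SS co n)) a = measure M (SS co n -` {..a} \<inter> space M)"
    unfolding cdf_def by (rule measure_distr) auto
  ultimately show ?thesis by simp
qed

lemma main_clt:
  "(\<lambda>n. SUP a::real. \<bar>measure M {\<omega> \<in> space M.
              (gut (\<lambda>i. c i \<omega>) n - expectation (\<lambda>\<omega>'. gut (\<lambda>i. c i \<omega>') n))
                / sqrt (variance (\<lambda>\<omega>'. gut (\<lambda>i. c i \<omega>') n)) \<le> a}
              - (LBINT t:{..a}. (exp (- (t^2) / 2) / sqrt (2 * pi)))\<bar>)
         \<longlonglongrightarrow> 0"
proof -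
  let ?F = "\<lambda>n. cdf (distr M borel (SS co n))"
  let ?P = "cdf std_normal_distribution"
  have "(\<lambda>n. SUP a. \<bar>?F n a - ?P a\<bar>) \<longlonglongrightarrow> 0"
  proof (rule polya)
    have rd: "real_distribution (distr M borel (SS co n))" for n by simp
    note rn = rd_cdf_facts[OF real_dist_normal_dist]
    fix n :: nat and x y :: real
    show "x \<le> y \<Longrightarrow> ?P x \<le> ?P y" by (rule rn(1))
    show "x \<le> y \<Longrightarrow> ?F n x \<le> ?F n y" by (rule rd_cdf_facts(1)[OF rd])
    show "0 \<le> ?F n x" by (rule rd_cdf_facts(2)[OF rd])
    show "?F n x \<le> 1" by (rule rd_cdf_facts(3)[OF rd])
    show "(?P \<longlongrightarrow> 0) at_bot" by (rule rn(4))
    show "(?P \<longlongrightarrow> 1) at_top" by (rule rn(5))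
  qed (auto intro: isCont_cdf_std_normal cdf_conv)
  then show ?thesis by (simp add: meas_eq cdf_std_normal)
qed

end

theorem theorem3p1:
  fixes M :: "'a measure" and c :: "nat \<Rightarrow> 'a \<Rightarrow> nat" and p1 :: real
  assumes "prob_space M"
    and meas: "\<And>n. c n \<in> measurable M (count_space UNIV)"
    and u1: "\<And>\<omega>. \<omega> \<in> space M \<Longrightarrow> c 1 \<omega> < 5"
    and un: "\<And>n \<omega>. n \<ge> 2 \<Longrightarrow> \<omega> \<in> space M \<Longrightarrow> c n \<omega> \<in> {1, 2, 3, 4}"
    and hyp1: "prob_space.indep_vars M (\<lambda>_. count_space UNIV) (\<lambda>n \<omega>. c n \<omega> \<in> {1, 4}) {2..}"
    and p1: "\<And>n. n \<ge> 2 \<Longrightarrow> measure M {\<omega> \<in> space M. c n \<omega> \<in> {1, 4}} = p1"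
    and hyp2: "0 < p1" "p1 < 1"
  shows "(\<forall>n\<ge>1. prob_space.variance M (\<lambda>\<omega>. gut (\<lambda>i. c i \<omega>) n) =
            (let s1 = 288^2 * p1 + 432^2 * (1 - p1) - (288 * p1 + 432 * (1 - p1))^2;
                 s1t = 156^2 * p1 + 300^2 * (1 - p1) - (156 * p1 + 300 * (1 - p1))^2;
                 r1 = 288 * 156 * p1 + 432 * 300 * (1 - p1)
                      - (288 * p1 + 432 * (1 - p1)) * (156 * p1 + 300 * (1 - p1));
                 x = real n
             in (s1 * x^5 - 5 * r1 * x^4 + 10 * s1t * x^3
                 + (65 * r1 - 30 * s1 - 45 * s1t) * x^2
                 + (59 * s1 + 65 * s1t - 120 * r1) * x
                 + (60 * r1 - 30 * s1 - 30 * s1t)) / 30))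
       \<and> (\<lambda>n. SUP a::real. \<bar>measure M {\<omega> \<in> space M.
              (gut (\<lambda>i. c i \<omega>) n - prob_space.expectation M (\<lambda>\<omega>'. gut (\<lambda>i. c i \<omega>') n))
                / sqrt (prob_space.variance M (\<lambda>\<omega>'. gut (\<lambda>i. c i \<omega>') n)) \<le> a}
              - (LBINT t:{..a}. (exp (- (t^2) / 2) / sqrt (2 * pi)))\<bar>)
         \<longlonglongrightarrow> 0"
proof -
  interpret P: pgs M c p1
    by (intro pgs.intro pgs_axioms.intro) (use assms in auto)
  show ?thesis using P.main_var P.main_clt by blast
qed

end
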